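(* Let $A$ and $B$ be (possibly isomorphic) strongly regular graphs with the same parameters, and let $A'$, $B'$ be obtained by individualizing a single vertex $a_1\in V(A)$, resp. $b_1\in V(B)$ (coloring it with color $1$; all other vertices uncolored). Let $G=G(A',B')$ and $H=G(A',A')$. (1) $\omega^{(r)}(G)=\omega^{(r)}(H)$ for all integers $r\ge0$, and therefore $\omega^{(\bullet)}(G)=\omega^{(\bullet)}(H)$. (2) If $\mathrm{WL}_{3/2}(A')\ne\mathrm{WL}_{3/2}(B')$, then $\mathrm{WL}_{3/2}(G)\ne\mathrm{WL}_{3/2}(H)$.
   Context: Graphs are finite, simple and undirected. A strongly regular graph with parameters $(n,d,\lambda,\mu)$ is an $n$-vertex $d$-regular graph in which any two adjacent vertices have $\lambda$ common neighbours and any two distinct non-adjacent vertices have $\mu$ common neighbours. Construction $G(A',B')$ (uncolored) for $m=1$: the vertex-disjoint union of $A$ and $B$ plus a connecting vertex $c_1$ adjacent to $a_1$ and $b_1$ and one pendant vertex $p_{1,1}$ adjacent only to $c_1$. $H=G(A',A')$ is built in the same way from two disjoint copies of $A'$. Walk invariants: $w_k(x,y)$ = number of walks of length $k$ from $x$ to $y$ in an $N$-vertex graph, $w_*(x,y)=(w_0(x,y),\dots,w_{N-1}(x,y))$; $\omega_0(x)=w_*(x,x)$, $\omega_{r+1}(x)=\big(\omega_r(x),\{\!\{(w_*(x,y),\omega_r(y))\}\!\}_{y}\big)$ ($\{\!\{\cdot\}\!\}$ = multiset); $\omega^{(r)}(G)=\{\!\{\omega_r(x)\}\!\}_{x\in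 V(G)}$ and $\omega^{(\bullet)}(G)=\omega^{(N)}(G)$. Color refinement on a vertex-colored $N$-vertex graph $X$: $C^0(x)$ is the color of $x$ (common default for uncolored vertices), $C^{r+1}(x)=\big(C^r(x),\{\!\{C^r(y)\}\!\}_{y\in N(x)}\big)$, $\mathrm{WL}_1(X)=\{\!\{C^N(x)\}\!\}_{x}$. For a vertex $x$, $X_x$ is $X$ with $x$ additionally given a special new color (the same special color for every choice of $x$, distinct from all colors already used). $\mathrm{WL}_{3/2}(X)=\{\!\{\mathrm{WL}_1(X_x)\}\!\}_{x\in V(X)}$. *)

theory Defs
  imports Main "HOL-Library.Multiset"
begin

definition simple_graph :: "'a set \<Rightarrow> ('a \<Rightarrow> 'a \<Rightarrow> bool) \<Rightarrow> bool" where
  "simple_graph V E \<longleftrightarrow> finite V \<and> (\<forall>x y. E x y \<longrightarrow> x \<in> V \<and> y \<in> V)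
     \<and> (\<forall>x y. E x y \<longrightarrow> E y x) \<and> (\<forall>x. \<not> E x x)"

definition nbrs :: "'a set \<Rightarrow> ('a \<Rightarrow> 'a \<Rightarrow> bool) \<Rightarrow> 'a \<Rightarrow> 'a set" where
  "nbrs V E x = {y \<in> V. E x y}"

definition strongly_regular ::
  "'a set \<Rightarrow> ('a \<Rightarrow> 'a \<Rightarrow> bool) \<Rightarrow> nat \<Rightarrow> nat \<Rightarrow> nat \<Rightarrow> nat \<Rightarrow> bool" where
  "strongly_regular V E n d lam mu \<longleftrightarrow> simple_graph V E \<and> card V = n
     \<and> (\<forall>x\<in>V. card (nbrs V E x) = d)
     \<and> (\<forall>x\<in>V. \<forall>y\<in>V. E x y \<longrightarrow> card (nbrs V E x \<inter> nbrs V E y) = lam)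
     \<and> (\<forall>x\<in>V. \<forall>y\<in>V. x \<noteq> y \<and> \<not> E x y \<longrightarrow> card (nbrs V E x \<inter> nbrs V E y) = mu)"

text \<open>Construction G(A',B') for m = 1 (uncolored).\<close>
datatype ('a, 'b) gvert = InA 'a | InB 'b | Conn | Pend

definition constr_V :: "'a set \<Rightarrow> 'b set \<Rightarrow> ('a, 'b) gvert set" where
  "constr_V VA VB = InA ` VA \<union> InB ` VB \<union> {Conn, Pend}"

fun constr_E :: "('a \<Rightarrow> 'a \<Rightarrow> bool) \<Rightarrow> ('b \<Rightarrow> 'b \<Rightarrow> bool) \<Rightarrow> 'a \<Rightarrow> 'b
   \<Rightarrow> ('a, 'b) gvert \<Rightarrow> ('a, 'b) gvert \<Rightarrow> bool" where
  "constr_E EA EB a1 b1 (InA x) (InA y) = EA x y"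
| "constr_E EA EB a1 b1 (InB x) (InB y) = EB x y"
| "constr_E EA EB a1 b1 Conn (InA x) = (x = a1)"
| "constr_E EA EB a1 b1 (InA x) Conn = (x = a1)"
| "constr_E EA EB a1 b1 Conn (InB x) = (x = b1)"
| "constr_E EA EB a1 b1 (InB x) Conn = (x = b1)"
| "constr_E EA EB a1 b1 Conn Pend = True"
| "constr_E EA EB a1 b1 Pend Conn = True"
| "constr_E EA EB a1 b1 _ _ = False"

fun walks :: "'a set \<Rightarrow> ('a \<Rightarrow> 'a \<Rightarrow> bool) \<Rightarrow> nat \<Rightarrow> 'a \<Rightarrow> 'a \<Rightarrow> nat" where
  "walks V E 0 x y = (if x = y then 1 else 0)"
| "walks V E (Suc k) x y = (\<Sum>z\<in>nbrs V E x. walks V E k z y)"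

definition wstar :: "'a set \<Rightarrow> ('a \<Rightarrow> 'a \<Rightarrow> bool) \<Rightarrow> 'a \<Rightarrow> 'a \<Rightarrow> nat list" where
  "wstar V E x y = map (\<lambda>k. walks V E k x y) [0..<card V]"

datatype winv = W0 "nat list" | WS winv "(nat list \<times> winv) multiset"

fun omega :: "'a set \<Rightarrow> ('a \<Rightarrow> 'a \<Rightarrow> bool) \<Rightarrow> nat \<Rightarrow> 'a \<Rightarrow> winv" where
  "omega V E 0 x = W0 (wstar V E x x)"
| "omega V E (Suc r) x =
     WS (omega V E r x) (image_mset (\<lambda>y. (wstar V E x y, omega V E r y)) (mset_set V))"

definition omega_ms :: "'a set \<Rightarrow> ('a \<Rightarrow> 'a \<Rightarrow> bool) \<Rightarrow> nat \<Rightarrow> winv multiset" where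
  "omega_ms V E r = image_mset (omega V E r) (mset_set V)"

definition omega_bullet :: "'a set \<Rightarrow> ('a \<Rightarrow> 'a \<Rightarrow> bool) \<Rightarrow> winv multiset" where
  "omega_bullet V E = omega_ms V E (card V)"

datatype 'c crcol = C0 'c | CS "'c crcol" "'c crcol multiset"

fun cref :: "'a set \<Rightarrow> ('a \<Rightarrow> 'a \<Rightarrow> bool) \<Rightarrow> ('a \<Rightarrow> 'c) \<Rightarrow> nat \<Rightarrow> 'a \<Rightarrow> 'c crcol" where
  "cref V E col 0 x = C0 (col x)"
| "cref V E col (Suc r) x =
     CS (cref V E col r x) (image_mset (cref V E col r) (mset_set (nbrs V E x)))"

definition WL1 :: "'a set \<Rightarrow> ('a \<Rightarrow> 'a \<Rightarrow> bool) \<Rightarrow> ('a \<Rightarrow> 'c) \<Rightarrow> 'c crcol multiset" where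
  "WL1 V E col = image_mset (cref V E col (card V)) (mset_set V)"

definition indiv :: "('a \<Rightarrow> 'c) \<Rightarrow> 'a \<Rightarrow> 'a \<Rightarrow> 'c option" where
  "indiv col x = (\<lambda>v. if v = x then None else Some (col v))"

definition WL32 :: "'a set \<Rightarrow> ('a \<Rightarrow> 'a \<Rightarrow> bool) \<Rightarrow> ('a \<Rightarrow> 'c) \<Rightarrow> 'c option crcol multiset multiset" where
  "WL32 V E col = image_mset (\<lambda>x. WL1 V E (indiv col x)) (mset_set V)"

definition single_col :: "'a \<Rightarrow> 'a \<Rightarrow> nat" where
  "single_col a1 = (\<lambda>v. if v = a1 then 1 else 0)"

definition uncolored :: "'a \<Rightarrow> nat" where
  "uncolored = (\<lambda>_. 0)"

end

theory Submission
  imports Defs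
begin

lemma nbrs_sub: "nbrs V E x \<subseteq> V" by (auto simp: nbrs_def)
lemma finite_nbrs: "finite V \<Longrightarrow> finite (nbrs V E x)" by (rule finite_subset[OF nbrs_sub])

lemma cref_iso:
  assumes fin: "finite V" and bij: "bij_betw f V V'"
    and edg: "\<And>x y. x \<in> V \<Longrightarrow> y \<in> V \<Longrightarrow> E' (f x) (f y) = E x y"
    and EV': "\<And>x y. E' x y \<Longrightarrow> x \<in> V' \<and> y \<in> V'"
    and col: "\<And>x. x \<in> V \<Longrightarrow> col' (f x) = col x"
  shows "x \<in> V \<Longrightarrow> cref V' E' col' r (f x) = cref V E col r x"
proof (induction r arbitrary: x)
  case 0 then show ?case using col by simp
next
  case (Suc r)
  have nb: "nbrs V' E' (f x) = f ` nbrs V E x"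
  proof
    show "nbrs V' E' (f x) \<subseteq> f ` nbrs V E x"
    proof
      fix y assume "y \<in> nbrs V' E' (f x)"
      then have y: "y \<in> V'" "E' (f x) y" by (auto simp: nbrs_def)
      then obtain z where z: "z \<in> V" "y = f z" using bij by (auto simp: bij_betw_def)
      then show "y \<in> f ` nbrs V E x" using y edg[OF Suc.prems z(1)] by (auto simp: nbrs_def)
    qed
  next
    show "f ` nbrs V E x \<subseteq> nbrs V' E' (f x)"
      using edg[OF Suc.prems] bij by (auto simp: nbrs_def bij_betw_def)
  qed
  have inj: "inj_on f (nbrs V E x)" using bij nbrs_sub[of V E x] by (auto simp: bij_betw_def intro: inj_on_subset)
  have "image_mset (cref V' E' col' r) (mset_set (nbrs V' E' (f x)))
      = image_mset (cref V' E' col' r) (image_mset f (mset_set (nbrs V E x)))"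
    using nb inj by (simp add: image_mset_mset_set)
  also have "\<dots> = image_mset (cref V E col r) (mset_set (nbrs V E x))"
    unfolding multiset.map_comp
    apply (rule multiset.map_cong0)
    using Suc.IH nbrs_sub[of V E x] finite_nbrs[OF fin, of E x]
    by (auto simp: elem_mset_set)
  finally show ?case using Suc by simp
qed

fun eqF :: "('k \<Rightarrow> 'c) \<Rightarrow> ('k \<Rightarrow> 'k multiset) \<Rightarrow> nat \<Rightarrow> 'k \<Rightarrow> 'c crcol" where
  "eqF cc Q 0 k = C0 (cc k)"
| "eqF cc Q (Suc r) k = CS (eqF cc Q r k) (image_mset (eqF cc Q r) (Q k))"

lemma cref_equit:
  assumes fin: "finite V"
    and col: "\<And>x. x \<in> V \<Longrightarrow> col x = cc (cls x)"
    and Q: "\<And>x. x \<in> V \<Longrightarrow> image_mset cls (mset_set (nbrs V E x)) = Q (cls x)"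
  shows "x \<in> V \<Longrightarrow> cref V E col r x = eqF cc Q r (cls x)"
proof (induction r arbitrary: x)
  case 0 then show ?case using col by simp
next
  case (Suc r)
  have "image_mset (cref V E col r) (mset_set (nbrs V E x))
       = image_mset (eqF cc Q r \<circ> cls) (mset_set (nbrs V E x))"
    apply (rule multiset.map_cong0)
    using Suc.IH nbrs_sub[of V E x] finite_nbrs[OF fin, of E x] by (auto simp: elem_mset_set)
  also have "\<dots> = image_mset (eqF cc Q r) (Q (cls x))"
    by (simp add: multiset.map_comp[symmetric] Q[OF Suc.prems])
  finally show ?case using Suc by simp
qed

fun omF :: "('k \<Rightarrow> 'k \<Rightarrow> nat \<Rightarrow> nat list) \<Rightarrow> ('k \<Rightarrow> ('k \<times> nat) multiset) \<Rightarrow> nat \<Rightarrow> 'k \<Rightarrow> winv" where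
  "omF Wf Q 0 k = W0 (Wf k k 0)"
| "omF Wf Q (Suc r) k = WS (omF Wf Q r k) (image_mset (\<lambda>(k', \<rho>). (Wf k k' \<rho>, omF Wf Q r k')) (Q k))"

lemma omega_cls:
  assumes fin: "finite V"
    and W: "\<And>x y. x \<in> V \<Longrightarrow> y \<in> V \<Longrightarrow> wstar V E x y = Wf (cls x) (cls y) (rel x y)"
    and rel0: "\<And>x. rel x x = 0"
    and Q: "\<And>x. x \<in> V \<Longrightarrow> image_mset (\<lambda>y. (cls y, rel x y)) (mset_set V) = Q (cls x)"
  shows "x \<in> V \<Longrightarrow> omega V E r x = omF Wf Q r (cls x)"
proof (induction r arbitrary: x)
  case 0 then show ?case using W rel0 by simp
next
  case (Suc r)
  have "image_mset (\<lambda>y. (wstar V E x y, omega V E r y)) (mset_set V)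
       = image_mset ((\<lambda>(k', \<rho>). (Wf (cls x) k' \<rho>, omF Wf Q r k')) \<circ> (\<lambda>y. (cls y, rel x y))) (mset_set V)"
    apply (rule multiset.map_cong0)
    using Suc W fin by (auto simp: elem_mset_set)
  also have "\<dots> = image_mset (\<lambda>(k', \<rho>). (Wf (cls x) k' \<rho>, omF Wf Q r k')) (Q (cls x))"
    by (simp add: multiset.map_comp[symmetric] Q[OF Suc.prems])
  finally show ?case using Suc by simp
qed


definition rl :: "('a \<Rightarrow> 'a \<Rightarrow> bool) \<Rightarrow> 'a \<Rightarrow> 'a \<Rightarrow> nat" where
  "rl E x y = (if x = y then 0 else if E x y then 1 else 2)"

lemma img_const: "finite S \<Longrightarrow> (\<And>x. x \<in> S \<Longrightarrow> f x = c) \<Longrightarrow> image_mset f (mset_set S) = replicate_mset (card S) c"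
proof (induction S rule: finite_induct)
  case empty then show ?case by simp
next
  case (insert x F) then show ?case by simp
qed

lemma img_cells:
  assumes "finite S" "finite R" "f ` S \<subseteq> R"
  shows "image_mset f (mset_set S) = (\<Sum>p\<in>R. replicate_mset (card {x\<in>S. f x = p}) p)"
proof (rule multiset_eqI)
  fix q
  have l: "count (image_mset f (mset_set S)) q = card {x\<in>S. f x = q}"
    using assms(1) by (simp add: count_image_mset Int_def conj_commute)
  have r: "count (\<Sum>p\<in>R. replicate_mset (card {x\<in>S. f x = p}) p) q
        = (\<Sum>p\<in>R. if p = q then card {x\<in>S. f x = p} else 0)"
    by (auto simp: count_sum intro: sum.cong)
  show "count (image_mset f (mset_set S)) q = count (\<Sum>p\<in>R. replicate_mset (card {x\<in>S. f x = p}) p) q"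
  proof (cases "q \<in> R")
    case True then show ?thesis using l r assms(2) by (simp add: sum.delta')
  next
    case False
    then have "{x\<in>S. f x = q} = {}" using assms(3) by auto
    have "(\<Sum>p\<in>R. if p = q then card {x\<in>S. f x = p} else 0) = 0"
      using False by (intro sum.neutral) auto
    then show ?thesis using l r \<open>{x\<in>S. f x = q} = {}\<close> by simp
  qed
qed

lemma sum_cells:
  assumes "finite S" "finite R" "f ` S \<subseteq> R"
  shows "(\<Sum>p\<in>R. card {x\<in>S. f x = p}) = card S"
proof -
  have "size (image_mset f (mset_set S)) = card S" by simp
  then show ?thesis using img_cells[OF assms] by simp
qed


context
  fixes V :: "'a set" and E n d lam mu
  assumes srg: "strongly_regular V E n d lam mu"
begin

lemma srg_fin: "finite V" using srg by (simp add: strongly_regular_def simple_graph_def)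
lemma srg_sym: "E x y \<Longrightarrow> E y x" using srg by (simp add: strongly_regular_def simple_graph_def)
lemma srg_irr: "\<not> E x x" using srg by (simp add: strongly_regular_def simple_graph_def)
lemma srg_V: "E x y \<Longrightarrow> x \<in> V \<and> y \<in> V" using srg by (simp add: strongly_regular_def simple_graph_def)
lemma srg_card: "card V = n" using srg by (simp add: strongly_regular_def)
lemma srg_deg: "u \<in> V \<Longrightarrow> card (nbrs V E u) = d" using srg by (simp add: strongly_regular_def)
lemma srg_lam: "u \<in> V \<Longrightarrow> v \<in> V \<Longrightarrow> E u v \<Longrightarrow> card (nbrs V E u \<inter> nbrs V E v) = lam"
  using srg by (simp add: strongly_regular_def)
lemma srg_mu: "u \<in> V \<Longrightarrow> v \<in> V \<Longrightarrow> u \<noteq> v \<Longrightarrow> \<not> E u v \<Longrightarrow> card (nbrs V E u \<inter> nbrs V E v) = mu"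
  using srg by (simp add: strongly_regular_def)

lemma srg_E_sym: "E x y = E y x" using srg_sym by blast

lemma cnt_eq: "v \<in> V \<Longrightarrow> card {w\<in>nbrs V E u. w = v} = (if E u v then 1 else 0)"
proof -
  assume v: "v \<in> V"
  have "{w\<in>nbrs V E u. w = v} = (if E u v then {v} else {})" using v by (auto simp: nbrs_def)
  then show ?thesis by simp
qed

lemma cnt_adj: "u \<in> V \<Longrightarrow> v \<in> V \<Longrightarrow> card {w\<in>nbrs V E u. E w v} = (if u = v then d else if E u v then lam else mu)"
proof -
  assume uv: "u \<in> V" "v \<in> V"
  have e: "{w\<in>nbrs V E u. E w v} = nbrs V E u \<inter> nbrs V E v" by (auto simp: nbrs_def srg_E_sym)
  show ?thesis unfolding e using srg_deg srg_lam srg_mu uv by auto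
qed

lemma cnt_non: "u \<in> V \<Longrightarrow> v \<in> V \<Longrightarrow> card {w\<in>nbrs V E u. w \<noteq> v \<and> \<not> E w v}
   = (if u = v then 0 else if E u v then d - lam - 1 else d - mu)"
proof -
  assume uv: "u \<in> V" "v \<in> V"
  have fin: "finite (nbrs V E u)" using finite_nbrs[OF srg_fin] .
  have e: "{w\<in>nbrs V E u. w \<noteq> v \<and> \<not> E w v} = nbrs V E u - ({w\<in>nbrs V E u. E w v} \<union> {w\<in>nbrs V E u. w = v})"
    by auto
  have disj: "{w\<in>nbrs V E u. E w v} \<inter> {w\<in>nbrs V E u. w = v} = {}" using srg_irr by auto
  have "card ({w\<in>nbrs V E u. E w v} \<union> {w\<in>nbrs V E u. w = v}) = card {w\<in>nbrs V E u. E w v} + card {w\<in>nbrs V E u. w = v}"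
    using fin disj by (intro card_Un_disjoint) auto
  then have "card {w\<in>nbrs V E u. w \<noteq> v \<and> \<not> E w v} = d - (card {w\<in>nbrs V E u. E w v} + card {w\<in>nbrs V E u. w = v})"
    unfolding e using fin srg_deg[OF uv(1)] by (subst card_Diff_subset) auto
  then show ?thesis using cnt_adj[OF uv] cnt_eq[OF uv(2), of u] srg_irr by (auto simp: srg_E_sym)
qed

lemma rl_sym: "rl E x y = rl E y x" by (auto simp: rl_def srg_E_sym)

lemma rl_count:
  assumes a: "a \<in> V"
  shows "image_mset (\<lambda>w. rl E w a) (mset_set V) = {#0#} + replicate_mset d 1 + replicate_mset (n - 1 - d) 2"
proof -
  have R: "(\<lambda>w. rl E w a) ` V \<subseteq> {0,1,2}" by (auto simp: rl_def)
  have c0: "card {w\<in>V. rl E w a = 0} = 1"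
  proof -
    have "{w\<in>V. rl E w a = 0} = {a}" using a by (auto simp: rl_def)
    then show ?thesis by simp
  qed
  have c1: "card {w\<in>V. rl E w a = (1::nat)} = d"
  proof -
    have "{w\<in>V. rl E w a = 1} = nbrs V E a" using srg_irr by (auto simp: rl_def nbrs_def srg_E_sym)
    then show ?thesis using srg_deg[OF a] by simp
  qed
  have s: "(\<Sum>p\<in>{0,1,2}. card {w\<in>V. rl E w a = p}) = n"
    using sum_cells[OF srg_fin _ R] srg_card by simp
  then have c2: "card {w\<in>V. rl E w a = 2} = n - 1 - d" using c0 c1 by simp
  show ?thesis using img_cells[OF srg_fin _ R] c0 c1 c2 by simp
qed

end

definition P11 :: "nat \<Rightarrow> nat \<Rightarrow> nat \<Rightarrow> nat \<Rightarrow> nat" where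
  "P11 d lam mu t = (if t = 0 then d else if t = 1 then lam else mu)"
definition P12 :: "nat \<Rightarrow> nat \<Rightarrow> nat \<Rightarrow> nat \<Rightarrow> nat" where
  "P12 d lam mu t = (if t = 0 then 0 else if t = 1 then d - lam - 1 else d - mu)"

definition pcnt :: "nat \<Rightarrow> nat \<Rightarrow> nat \<Rightarrow> nat \<Rightarrow> nat \<Rightarrow> nat \<times> nat \<Rightarrow> nat" where
  "pcnt n d lam mu t p = (case p of (i, j) \<Rightarrow>
     if i = 0 then (if t = j then 1 else 0)
     else if j = 0 then (if t = i then 1 else 0)
     else if i = 1 \<and> j = 1 then P11 d lam mu t
     else if i = 1 \<and> j = 2 \<or> i = 2 \<and> j = 1 then P12 d lam mu t
     else if i = 2 \<and> j = 2 then n - (1 + (if t = 0 then 0 else 1) + P11 d lam mu t + 2 * P12 d lam mu t)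
     else 0)"

definition PCm :: "nat \<Rightarrow> nat \<Rightarrow> nat \<Rightarrow> nat \<Rightarrow> nat \<Rightarrow> (nat \<times> nat) multiset" where
  "PCm n d lam mu t = (\<Sum>p\<in>{0,1,2}\<times>{0,1,2}. replicate_mset (pcnt n d lam mu t p) p)"

context
  fixes V :: "'a set" and E n d lam mu
  assumes srg: "strongly_regular V E n d lam mu"
begin

lemma pair_count:
  assumes a: "a \<in> V" and u: "u \<in> V"
  shows "image_mset (\<lambda>w. (rl E w a, rl E w u)) (mset_set V) = PCm n d lam mu (rl E u a)"
proof -
  let ?f = "\<lambda>w. (rl E w a, rl E w u)"
  let ?t = "rl E u a"
  let ?R = "{0::nat,1,2}\<times>{0::nat,1,2}"
  have R: "?f ` V \<subseteq> ?R" by (rule image_subsetI) (simp add: rl_def)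
  have fR: "finite ?R" by simp
  have irr: "\<And>x. \<not> E x x" using srg_irr[OF srg] .
  have sym: "\<And>x y. E x y = E y x" using srg_E_sym[OF srg] .
  have cell: "card {w\<in>V. ?f w = p} = pcnt n d lam mu ?t p" if p: "p \<in> ?R" "p \<noteq> (2,2)" for p
  proof -
    obtain i j where ij: "p = (i,j)" by (cases p)
    consider "i = 0" | "i \<noteq> 0" "j = 0" | "i = 1" "j = 1" | "i = 1" "j = 2" | "i = 2" "j = 1"
      using p ij by auto
    then show ?thesis
    proof cases
      case 1
      have "{w\<in>V. ?f w = p} = (if rl E a u = j then {a} else {})" using a 1 ij by (auto simp: rl_def)
      then show ?thesis using 1 ij by (simp add: pcnt_def rl_sym[OF srg])
    next
      case 2
      have "{w\<in>V. ?f w = p} = (if ?t = i then {u} else {})" using u 2 ij by (auto simp: rl_def)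
      then show ?thesis using 2 ij by (simp add: pcnt_def)
    next
      case 3
      have "{w\<in>V. ?f w = p} = {w\<in>nbrs V E a. E w u}" using 3 ij irr by (auto simp: rl_def nbrs_def sym)
      then show ?thesis using 3 ij cnt_adj[OF srg a u] by (auto simp: pcnt_def P11_def rl_def sym)
    next
      case 4
      have "{w\<in>V. ?f w = p} = {w\<in>nbrs V E a. w \<noteq> u \<and> \<not> E w u}" using 4 ij irr by (auto simp: rl_def nbrs_def sym)
      then show ?thesis using 4 ij cnt_non[OF srg a u] by (auto simp: pcnt_def P12_def rl_def sym)
    next
      case 5
      have "{w\<in>V. ?f w = p} = {w\<in>nbrs V E u. w \<noteq> a \<and> \<not> E w a}" using 5 ij irr by (auto simp: rl_def nbrs_def sym)
      then show ?thesis using 5 ij cnt_non[OF srg u a] by (auto simp: pcnt_def P12_def rl_def sym)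
    qed
  qed
  have s: "(\<Sum>p\<in>?R. card {w\<in>V. ?f w = p}) = n"
    using sum_cells[OF srg_fin[OF srg] fR R] srg_card[OF srg] by simp
  have R': "?R = insert (2,2) (?R - {(2,2)})" by auto
  have s2: "(\<Sum>p\<in>?R - {(2,2)}. card {w\<in>V. ?f w = p}) = (\<Sum>p\<in>?R - {(2,2)}. pcnt n d lam mu ?t p)"
    using cell by (intro sum.cong) auto
  have s3: "(\<Sum>p\<in>?R - {(2,2)}. pcnt n d lam mu ?t p) = 1 + (if ?t = 0 then 0 else 1) + P11 d lam mu ?t + 2 * P12 d lam mu ?t"
  proof -
    have e: "?R - {(2,2)} = {(0,0),(0,1),(0,2),(1,0),(2,0),(1,1),(1,2),(2,1)}" by auto
    have t: "?t \<in> {0,1,2}" by (auto simp: rl_def)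
    show ?thesis unfolding e using t by (auto simp: pcnt_def)
  qed
  have in22: "(2,2) \<in> ?R" by simp
  have s4: "(\<Sum>p\<in>?R. card {w\<in>V. ?f w = p}) = card {w\<in>V. ?f w = (2,2)} + (\<Sum>p\<in>?R - {(2,2)}. card {w\<in>V. ?f w = p})"
    by (rule sum.remove[OF fR in22])
  have c22': "card {w\<in>V. ?f w = (2,2)} = n - (1 + (if ?t = 0 then 0 else 1) + P11 d lam mu ?t + 2 * P12 d lam mu ?t)"
    using s s2 s3 s4 by linarith
  have c22: "card {w\<in>V. ?f w = (2,2)} = pcnt n d lam mu ?t (2,2)"
    unfolding c22' by (simp add: pcnt_def)
  have "image_mset ?f (mset_set V) = (\<Sum>p\<in>?R. replicate_mset (card {w\<in>V. ?f w = p}) p)"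
    by (rule img_cells[OF srg_fin[OF srg] fR R])
  also have "\<dots> = (\<Sum>p\<in>?R. replicate_mset (pcnt n d lam mu ?t p) p)"
  proof (rule sum.cong[OF refl])
    fix p assume p: "p \<in> ?R"
    show "replicate_mset (card {w\<in>V. ?f w = p}) p = replicate_mset (pcnt n d lam mu ?t p) p"
    proof (cases "p = (2,2)")
      case True then show ?thesis using c22 by (simp only:)
    next
      case False then show ?thesis using cell[OF p False] by (simp only:)
    qed
  qed
  finally show ?thesis unfolding PCm_def .
qed

end

abbreviation "VG VA VB \<equiv> constr_V VA VB"

lemma constr_E_sym: "(\<And>x y. EA x y \<Longrightarrow> EA y x) \<Longrightarrow> (\<And>x y. EB x y \<Longrightarrow> EB y x) \<Longrightarrow>
  constr_E EA EB a1 b1 x y \<Longrightarrow> constr_E EA EB a1 b1 y x"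
  by (cases x; cases y; auto)

lemma constr_E_irr: "(\<And>x. \<not> EA x x) \<Longrightarrow> (\<And>x. \<not> EB x x) \<Longrightarrow> \<not> constr_E EA EB a1 b1 x x"
  by (cases x; auto)

lemma fin_VG: "finite VA \<Longrightarrow> finite VB \<Longrightarrow> finite (constr_V VA VB)"
  by (simp add: constr_V_def)

lemma card_VG: "finite VA \<Longrightarrow> finite VB \<Longrightarrow> card (constr_V VA VB :: ('a,'b) gvert set) = card VA + card VB + 2"
proof -
  assume f: "finite VA" "finite VB"
  have d1: "(InA ` VA \<union> InB ` VB) \<inter> {Conn, Pend} = {}" by auto
  have d2: "InA ` VA \<inter> InB ` VB = {}" by auto
  have "card (constr_V VA VB) = card (InA ` VA \<union> InB ` VB) + card {Conn, Pend :: ('a,'b) gvert}"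
    unfolding constr_V_def using f d1 by (intro card_Un_disjoint) auto
  also have "card (InA ` VA \<union> InB ` VB :: ('a,'b) gvert set) = card (InA ` VA :: ('a,'b) gvert set) + card (InB ` VB :: ('a,'b) gvert set)"
    using card_Un_disjoint[of "InA ` VA" "InB ` VB"] f d2 by auto
  also have "card (InA ` VA :: ('a,'b) gvert set) = card VA" by (rule card_image) (auto simp: inj_on_def)
  also have "card (InB ` VB :: ('a,'b) gvert set) = card VB" by (rule card_image) (auto simp: inj_on_def)
  finally show ?thesis by simp
qed

lemma mset_VG: "finite VA \<Longrightarrow> finite VB \<Longrightarrow>
  mset_set (constr_V VA VB :: ('a,'b) gvert set) = image_mset InA (mset_set VA) + image_mset InB (mset_set VB) + {#Conn, Pend#}"
proof -
  assume f: "finite VA" "finite VB"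
  have d1: "(InA ` VA \<union> InB ` VB) \<inter> {Conn, Pend} = {}" by auto
  have d2: "InA ` VA \<inter> InB ` VB = {}" by auto
  have "mset_set (constr_V VA VB) = mset_set (InA ` VA \<union> InB ` VB) + mset_set {Conn, Pend :: ('a,'b) gvert}"
    unfolding constr_V_def using f d1 by (intro mset_set_Union) auto
  also have "mset_set (InA ` VA \<union> InB ` VB :: ('a,'b) gvert set) = mset_set (InA ` VA :: ('a,'b) gvert set) + mset_set (InB ` VB :: ('a,'b) gvert set)"
    using f d2 by (intro mset_set_Union) auto
  also have "mset_set (InA ` VA :: ('a,'b) gvert set) = image_mset InA (mset_set VA)"
    by (rule image_mset_mset_set[symmetric]) (auto simp: inj_on_def)
  also have "mset_set (InB ` VB :: ('a,'b) gvert set) = image_mset InB (mset_set VB)"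
    by (rule image_mset_mset_set[symmetric]) (auto simp: inj_on_def)
  finally show ?thesis by simp
qed

context
  fixes VA :: "'a set" and EA and VB :: "'b set" and EB and a1 b1
  assumes EAV: "\<And>x y. EA x y \<Longrightarrow> x \<in> VA \<and> y \<in> VA"
    and EBV: "\<And>x y. EB x y \<Longrightarrow> x \<in> VB \<and> y \<in> VB"
    and a1: "a1 \<in> VA" and b1: "b1 \<in> VB"
begin

lemma nbrs_InA: "nbrs (constr_V VA VB) (constr_E EA EB a1 b1) (InA u)
   = InA ` nbrs VA EA u \<union> (if u = a1 then {Conn} else {})"
  using EAV a1 b1 by (auto simp: nbrs_def constr_V_def elim: constr_E.elims)

lemma nbrs_InB: "nbrs (constr_V VA VB) (constr_E EA EB a1 b1) (InB u)
   = InB ` nbrs VB EB u \<union> (if u = b1 then {Conn} else {})"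
  using EBV a1 b1 by (auto simp: nbrs_def constr_V_def elim: constr_E.elims)

lemma nbrs_Conn: "nbrs (constr_V VA VB) (constr_E EA EB a1 b1) Conn = {InA a1, InB b1, Pend}"
  using a1 b1 by (auto simp: nbrs_def constr_V_def elim: constr_E.elims)

lemma nbrs_Pend: "nbrs (constr_V VA VB) (constr_E EA EB a1 b1) Pend = {Conn}"
  by (auto simp: nbrs_def constr_V_def elim: constr_E.elims)

lemma sum_nbrs_InA: "finite VA \<Longrightarrow> (\<Sum>z\<in>nbrs (constr_V VA VB) (constr_E EA EB a1 b1) (InA u). f z)
   = (\<Sum>w\<in>nbrs VA EA u. f (InA w)) + (if u = a1 then f Conn else 0)"
proof -
  assume fin: "finite VA"
  have fn: "finite (nbrs VA EA u)" using finite_nbrs[OF fin] .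
  have "(\<Sum>z\<in>InA ` nbrs VA EA u \<union> (if u = a1 then {Conn} else {}). f z)
     = (\<Sum>z\<in>InA ` nbrs VA EA u. f z) + (\<Sum>z\<in>(if u = a1 then {Conn} else {}). f z)"
    using fn by (intro sum.union_disjoint) auto
  also have "(\<Sum>z\<in>InA ` nbrs VA EA u. f z) = (\<Sum>w\<in>nbrs VA EA u. f (InA w))"
    by (rule sum.reindex_cong[where l=InA]) (auto simp: inj_on_def)
  finally show ?thesis unfolding nbrs_InA by simp
qed

lemma sum_nbrs_InB: "finite VB \<Longrightarrow> (\<Sum>z\<in>nbrs (constr_V VA VB) (constr_E EA EB a1 b1) (InB u). f z)
   = (\<Sum>w\<in>nbrs VB EB u. f (InB w)) + (if u = b1 then f Conn else 0)"
proof -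
  assume fin: "finite VB"
  have fn: "finite (nbrs VB EB u)" using finite_nbrs[OF fin] .
  have "(\<Sum>z\<in>InB ` nbrs VB EB u \<union> (if u = b1 then {Conn} else {}). f z)
     = (\<Sum>z\<in>InB ` nbrs VB EB u. f z) + (\<Sum>z\<in>(if u = b1 then {Conn} else {}). f z)"
    using fn by (intro sum.union_disjoint) auto
  also have "(\<Sum>z\<in>InB ` nbrs VB EB u. f z) = (\<Sum>w\<in>nbrs VB EB u. f (InB w))"
    by (rule sum.reindex_cong[where l=InB]) (auto simp: inj_on_def)
  finally show ?thesis unfolding nbrs_InB by simp
qed

lemma sum_nbrs_Conn: "(\<Sum>z\<in>nbrs (constr_V VA VB) (constr_E EA EB a1 b1) Conn. f z) = f (InA a1) + f (InB b1) + f Pend"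
  unfolding nbrs_Conn by (simp add: add.assoc)

lemma sum_nbrs_Pend: "(\<Sum>z\<in>nbrs (constr_V VA VB) (constr_E EA EB a1 b1) Pend. f z) = f Conn"
  unfolding nbrs_Pend by simp

end

datatype cl = A0 | A1 | A2 | B0 | B1 | B2 | CC | PP

fun acl :: "nat \<Rightarrow> cl" where "acl 0 = A0" | "acl (Suc 0) = A1" | "acl (Suc (Suc _)) = A2"
fun bcl :: "nat \<Rightarrow> cl" where "bcl 0 = B0" | "bcl (Suc 0) = B1" | "bcl (Suc (Suc _)) = B2"
lemma acl2[simp]: "acl 2 = A2" and bcl2[simp]: "bcl 2 = B2" by (simp_all add: numeral_2_eq_2)

lemma acl_rl[simp]:
  "(acl (rl E x y) = A0) = (x = y)" "(acl (rl E x y) = A1) = (x \<noteq> y \<and> E x y)"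
  "(acl (rl E x y) = A2) = (x \<noteq> y \<and> \<not> E x y)"
  "acl r \<noteq> B0" "acl r \<noteq> B1" "acl r \<noteq> B2" "acl r \<noteq> CC" "acl r \<noteq> PP"
  by (auto simp: rl_def elim: acl.elims)
lemma bcl_rl[simp]:
  "(bcl (rl E x y) = B0) = (x = y)" "(bcl (rl E x y) = B1) = (x \<noteq> y \<and> E x y)"
  "(bcl (rl E x y) = B2) = (x \<noteq> y \<and> \<not> E x y)"
  "bcl r \<noteq> A0" "bcl r \<noteq> A1" "bcl r \<noteq> A2" "bcl r \<noteq> CC" "bcl r \<noteq> PP"
  by (auto simp: rl_def elim: bcl.elims)

fun cls :: "('a \<Rightarrow> 'a \<Rightarrow> bool) \<Rightarrow> ('b \<Rightarrow> 'b \<Rightarrow> bool) \<Rightarrow> 'a \<Rightarrow> 'b \<Rightarrow> ('a,'b) gvert \<Rightarrow> cl" where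
  "cls EA EB a1 b1 (InA u) = acl (rl EA u a1)"
| "cls EA EB a1 b1 (InB u) = bcl (rl EB u b1)"
| "cls EA EB a1 b1 Conn = CC"
| "cls EA EB a1 b1 Pend = PP"

fun sside :: "('a,'b) gvert \<Rightarrow> ('a,'b) gvert \<Rightarrow> bool" where
  "sside (InA _) (InA _) = True"
| "sside (InB _) (InB _) = True"
| "sside _ _ = False"

datatype bix = Ey | Ny | Ry | Kc cl

definition BIX :: "bix set" where
  "BIX = {Ey, Ny, Ry, Kc A0, Kc A1, Kc A2, Kc B0, Kc B1, Kc B2, Kc CC, Kc PP}"

fun bas :: "('a \<Rightarrow> 'a \<Rightarrow> bool) \<Rightarrow> ('b \<Rightarrow> 'b \<Rightarrow> bool) \<Rightarrow> 'a \<Rightarrow> 'b \<Rightarrow> ('a,'b) gvert \<Rightarrow> bix \<Rightarrow> ('a,'b) gvert \<Rightarrow> nat" where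
  "bas EA EB a1 b1 y Ey x = of_bool (x = y)"
| "bas EA EB a1 b1 y Ny x = of_bool (sside x y \<and> constr_E EA EB a1 b1 x y)"
| "bas EA EB a1 b1 y Ry x = of_bool (sside x y \<and> x \<noteq> y \<and> \<not> constr_E EA EB a1 b1 x y)"
| "bas EA EB a1 b1 y (Kc k) x = of_bool (cls EA EB a1 b1 x = k)"

definition sd :: "cl \<Rightarrow> bool" where "sd c = (c \<noteq> CC \<and> c \<noteq> PP)"

fun T :: "nat \<Rightarrow> nat \<Rightarrow> nat \<Rightarrow> cl \<Rightarrow> bix \<Rightarrow> bix \<Rightarrow> nat" where
  "T d lam mu cy Ey j = (if j = Ny then 1 else if j = Kc CC then of_bool (cy = A0 \<or> cy = B0 \<or> cy = PP)
      else if j = Kc A0 \<or> j = Kc B0 \<or> j = Kc PP then of_bool (cy = CC) else 0)"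
| "T d lam mu cy Ny j = (if sd cy then (if j = Ey then d else if j = Ny then lam else if j = Ry then mu else 0) else 0)
      + (if j = Kc CC \<and> (cy = A1 \<or> cy = B1) then 1 else 0)"
| "T d lam mu cy Ry j = (if sd cy then (if j = Ny then d - lam - 1 else if j = Ry then d - mu else 0) else 0)
      + (if j = Kc CC \<and> (cy = A2 \<or> cy = B2) then 1 else 0)"
| "T d lam mu cy (Kc A0) j = (if j = Kc A1 \<or> j = Kc CC then 1 else 0)"
| "T d lam mu cy (Kc A1) j = (if j = Kc A0 then d else if j = Kc A1 then lam else if j = Kc A2 then mu else 0)"
| "T d lam mu cy (Kc A2) j = (if j = Kc A1 then d - lam - 1 else if j = Kc A2 then d - mu else 0)"
| "T d lam mu cy (Kc B0) j = (if j = Kc B1 \<or> j = Kc CC then 1 else 0)"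
| "T d lam mu cy (Kc B1) j = (if j = Kc B0 then d else if j = Kc B1 then lam else if j = Kc B2 then mu else 0)"
| "T d lam mu cy (Kc B2) j = (if j = Kc B1 then d - lam - 1 else if j = Kc B2 then d - mu else 0)"
| "T d lam mu cy (Kc CC) j = (if j = Kc A0 \<or> j = Kc B0 \<or> j = Kc PP then 1 else 0)"
| "T d lam mu cy (Kc PP) j = (if j = Kc CC then 1 else 0)"

context
  fixes V :: "'a set" and E n d lam mu
  assumes srg: "strongly_regular V E n d lam mu"
begin

lemma sA1: "u \<in> V \<Longrightarrow> v \<in> V \<Longrightarrow> (\<Sum>w\<in>nbrs V E u. of_bool (w = v) :: nat) = of_bool (E u v)"
  using cnt_eq[OF srg, of v u] finite_nbrs[OF srg_fin[OF srg]] by (simp add: Int_def conj_commute)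
lemma sA2: "u \<in> V \<Longrightarrow> v \<in> V \<Longrightarrow> (\<Sum>w\<in>nbrs V E u. of_bool (E w v) :: nat) = (if u = v then d else if E u v then lam else mu)"
  using cnt_adj[OF srg, of u v] finite_nbrs[OF srg_fin[OF srg]] by (simp add: Int_def conj_commute)
lemma sA3: "u \<in> V \<Longrightarrow> v \<in> V \<Longrightarrow> (\<Sum>w\<in>nbrs V E u. of_bool (w \<noteq> v \<and> E w v) :: nat) = (if u = v then d else if E u v then lam else mu)"
proof -
  assume uv: "u \<in> V" "v \<in> V"
  have "(\<Sum>w\<in>nbrs V E u. of_bool (w \<noteq> v \<and> E w v) :: nat) = (\<Sum>w\<in>nbrs V E u. of_bool (E w v))"
    using srg_irr[OF srg] by (intro sum.cong) auto
  then show ?thesis using sA2[OF uv] by simp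
qed
lemma sA4: "u \<in> V \<Longrightarrow> v \<in> V \<Longrightarrow> (\<Sum>w\<in>nbrs V E u. of_bool (w \<noteq> v \<and> \<not> E w v) :: nat)
   = (if u = v then 0 else if E u v then d - lam - 1 else d - mu)"
  using cnt_non[OF srg, of u v] finite_nbrs[OF srg_fin[OF srg]] by (simp add: Int_def conj_commute)

lemma sA1': "u \<in> V \<Longrightarrow> v \<in> V \<Longrightarrow> (\<Sum>w\<in>nbrs V E u. of_bool (v = w) :: nat) = of_bool (E u v)"
  using sA1[of u v] by (simp add: eq_commute[of v])
lemma sA2': "u \<in> V \<Longrightarrow> v \<in> V \<Longrightarrow> (\<Sum>w\<in>nbrs V E u. of_bool (E v w) :: nat) = (if u = v then d else if E u v then lam else mu)"
  using sA2[of u v] by (simp add: srg_E_sym[OF srg, of v])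
lemma sA3': "u \<in> V \<Longrightarrow> v \<in> V \<Longrightarrow> (\<Sum>w\<in>nbrs V E u. of_bool (w \<noteq> v \<and> E v w) :: nat) = (if u = v then d else if E u v then lam else mu)"
  using sA3[of u v] by (simp add: srg_E_sym[OF srg, of v])
lemma sA4': "u \<in> V \<Longrightarrow> v \<in> V \<Longrightarrow> (\<Sum>w\<in>nbrs V E u. of_bool (w \<noteq> v \<and> \<not> E v w) :: nat)
   = (if u = v then 0 else if E u v then d - lam - 1 else d - mu)"
  using sA4[of u v] by (simp add: srg_E_sym[OF srg, of v])

end

context
  fixes VA :: "'a set" and EA and VB :: "'b set" and EB and a1 b1 n d lam mu
  assumes srgA: "strongly_regular VA EA n d lam mu"
    and srgB: "strongly_regular VB EB n d lam mu"
    and a1: "a1 \<in> VA" and b1: "b1 \<in> VB"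
begin

lemma EAV: "EA x y \<Longrightarrow> x \<in> VA \<and> y \<in> VA" using srg_V[OF srgA] .
lemma EBV: "EB x y \<Longrightarrow> x \<in> VB \<and> y \<in> VB" using srg_V[OF srgB] .
lemma finA: "finite VA" using srg_fin[OF srgA] .
lemma finB: "finite VB" using srg_fin[OF srgB] .

lemmas sumN = sum_nbrs_InA[OF EAV EBV a1 b1 finA] sum_nbrs_InB[OF EAV EBV a1 b1 finB]
   sum_nbrs_Conn[OF EAV EBV a1 b1] sum_nbrs_Pend[OF EAV EBV a1 b1]
lemmas sAs = sA1[OF srgA] sA2[OF srgA] sA3[OF srgA] sA4[OF srgA] sA1[OF srgB] sA2[OF srgB] sA3[OF srgB] sA4[OF srgB]
  sA1'[OF srgA] sA2'[OF srgA] sA3'[OF srgA] sA4'[OF srgA] sA1'[OF srgB] sA2'[OF srgB] sA3'[OF srgB] sA4'[OF srgB]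

lemmas Wsimps = BIX_def sd_def sAs a1 b1 srg_irr[OF srgA] srg_irr[OF srgB] srg_E_sym[OF srgA, of _ a1] srg_E_sym[OF srgB, of _ b1]

lemma transA: "u \<in> VA \<Longrightarrow> y \<in> constr_V VA VB \<Longrightarrow> i \<in> BIX \<Longrightarrow>
  (\<Sum>z\<in>nbrs (constr_V VA VB) (constr_E EA EB a1 b1) (InA u). bas EA EB a1 b1 y i z)
   = (\<Sum>j\<in>BIX. T d lam mu (cls EA EB a1 b1 y) i j * bas EA EB a1 b1 y j (InA u))"
  apply (simp only: sumN)
  apply (cases y; simp only: BIX_def constr_V_def; elim disjE insertE; simp add: Wsimps del: sum_of_bool_eq)
  apply (auto simp: Wsimps simp del: sum_of_bool_eq)
  done


lemma transB: "u \<in> VB \<Longrightarrow> y \<in> constr_V VA VB \<Longrightarrow> i \<in> BIX \<Longrightarrow>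
  (\<Sum>z\<in>nbrs (constr_V VA VB) (constr_E EA EB a1 b1) (InB u). bas EA EB a1 b1 y i z)
   = (\<Sum>j\<in>BIX. T d lam mu (cls EA EB a1 b1 y) i j * bas EA EB a1 b1 y j (InB u))"
  apply (simp only: sumN)
  apply (cases y; simp only: BIX_def constr_V_def; elim disjE insertE; simp add: Wsimps del: sum_of_bool_eq)
  apply (auto simp: Wsimps simp del: sum_of_bool_eq)
  done

lemma transC: "y \<in> constr_V VA VB \<Longrightarrow> i \<in> BIX \<Longrightarrow>
  (\<Sum>z\<in>nbrs (constr_V VA VB) (constr_E EA EB a1 b1) Conn. bas EA EB a1 b1 y i z)
   = (\<Sum>j\<in>BIX. T d lam mu (cls EA EB a1 b1 y) i j * bas EA EB a1 b1 y j Conn)"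
  apply (simp only: sumN)
  apply (cases y; simp only: BIX_def constr_V_def; elim disjE insertE; simp add: Wsimps del: sum_of_bool_eq)
  done

lemma transP: "y \<in> constr_V VA VB \<Longrightarrow> i \<in> BIX \<Longrightarrow>
  (\<Sum>z\<in>nbrs (constr_V VA VB) (constr_E EA EB a1 b1) Pend. bas EA EB a1 b1 y i z)
   = (\<Sum>j\<in>BIX. T d lam mu (cls EA EB a1 b1 y) i j * bas EA EB a1 b1 y j Pend)"
  apply (simp only: sumN)
  apply (cases y; simp only: BIX_def constr_V_def; elim disjE insertE; simp add: Wsimps del: sum_of_bool_eq)
  done

lemma trans: "x \<in> constr_V VA VB \<Longrightarrow> y \<in> constr_V VA VB \<Longrightarrow> i \<in> BIX \<Longrightarrow>
  (\<Sum>z\<in>nbrs (constr_V VA VB) (constr_E EA EB a1 b1) x. bas EA EB a1 b1 y i z)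
   = (\<Sum>j\<in>BIX. T d lam mu (cls EA EB a1 b1 y) i j * bas EA EB a1 b1 y j x)"
proof -
  assume x: "x \<in> constr_V VA VB" and y: "y \<in> constr_V VA VB" and i: "i \<in> BIX"
  from x have "(\<exists>u\<in>VA. x = InA u) \<or> (\<exists>u\<in>VB. x = InB u) \<or> x = Conn \<or> x = Pend"
    by (auto simp: constr_V_def)
  then show ?thesis
    by (elim disjE bexE) (simp_all add: transA[OF _ y i] transB[OF _ y i] transC[OF y i] transP[OF y i])
qed

end

fun coef :: "nat \<Rightarrow> nat \<Rightarrow> nat \<Rightarrow> nat \<Rightarrow> cl \<Rightarrow> bix \<Rightarrow> nat" where
  "coef d lam mu 0 cy j = of_bool (j = Ey)"
| "coef d lam mu (Suc k) cy j = (\<Sum>i\<in>BIX. coef d lam mu k cy i * T d lam mu cy i j)"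

definition isAc :: "cl \<Rightarrow> bool" where "isAc c = (c = A0 \<or> c = A1 \<or> c = A2)"
definition isBc :: "cl \<Rightarrow> bool" where "isBc c = (c = B0 \<or> c = B1 \<or> c = B2)"
definition ssc :: "cl \<Rightarrow> cl \<Rightarrow> bool" where "ssc cx cy = (isAc cx \<and> isAc cy \<or> isBc cx \<and> isBc cy)"

fun beta :: "bix \<Rightarrow> cl \<Rightarrow> cl \<Rightarrow> nat \<Rightarrow> nat" where
  "beta Ey cx cy \<rho> = of_bool (\<rho> = 0)"
| "beta Ny cx cy \<rho> = of_bool (ssc cx cy \<and> \<rho> = 1)"
| "beta Ry cx cy \<rho> = of_bool (ssc cx cy \<and> \<rho> = 2)"
| "beta (Kc k) cx cy \<rho> = of_bool (cx = k)"

definition WF :: "nat \<Rightarrow> nat \<Rightarrow> nat \<Rightarrow> nat \<Rightarrow> cl \<Rightarrow> cl \<Rightarrow> nat \<Rightarrow> nat" where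
  "WF d lam mu k cx cy \<rho> = (\<Sum>i\<in>BIX. coef d lam mu k cy i * beta i cx cy \<rho>)"

definition Wf :: "nat \<Rightarrow> nat \<Rightarrow> nat \<Rightarrow> nat \<Rightarrow> cl \<Rightarrow> cl \<Rightarrow> nat \<Rightarrow> nat list" where
  "Wf N d lam mu cx cy \<rho> = map (\<lambda>k. WF d lam mu k cx cy \<rho>) [0..<N]"

context
  fixes VA :: "'a set" and EA and VB :: "'b set" and EB and a1 b1 n d lam mu
  assumes srgA: "strongly_regular VA EA n d lam mu"
    and srgB: "strongly_regular VB EB n d lam mu"
    and a1: "a1 \<in> VA" and b1: "b1 \<in> VB"
begin

lemma walks_exp: "x \<in> constr_V VA VB \<Longrightarrow> y \<in> constr_V VA VB \<Longrightarrow>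
  walks (constr_V VA VB) (constr_E EA EB a1 b1) k x y
   = (\<Sum>i\<in>BIX. coef d lam mu k (cls EA EB a1 b1 y) i * bas EA EB a1 b1 y i x)"
proof (induction k arbitrary: x)
  case 0
  then show ?case by (simp add: BIX_def)
next
  case (Suc k)
  let ?V = "constr_V VA VB" and ?E = "constr_E EA EB a1 b1" and ?c = "coef d lam mu k (cls EA EB a1 b1 y)"
    and ?b = "bas EA EB a1 b1 y" and ?T = "T d lam mu (cls EA EB a1 b1 y)"
  have "walks ?V ?E (Suc k) x y = (\<Sum>z\<in>nbrs ?V ?E x. \<Sum>i\<in>BIX. ?c i * ?b i z)"
    using Suc.IH[OF _ Suc.prems(2)] nbrs_sub[of ?V ?E x] by (auto intro: sum.cong)
  also have "\<dots> = (\<Sum>i\<in>BIX. ?c i * (\<Sum>z\<in>nbrs ?V ?E x. ?b i z))"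
    unfolding sum_distrib_left by (rule sum.swap)
  also have "\<dots> = (\<Sum>i\<in>BIX. ?c i * (\<Sum>j\<in>BIX. ?T i j * ?b j x))"
    using trans[OF srgA srgB a1 b1 Suc.prems] by (intro sum.cong) auto
  also have "\<dots> = (\<Sum>j\<in>BIX. (\<Sum>i\<in>BIX. ?c i * ?T i j) * ?b j x)"
    unfolding sum_distrib_left sum_distrib_right mult.assoc by (rule sum.swap)
  finally show ?case by simp
qed

lemma irrG: "\<not> constr_E EA EB a1 b1 x x"
  by (rule constr_E_irr) (auto simp: srg_irr[OF srgA] srg_irr[OF srgB])

lemma bas_beta: "x \<in> constr_V VA VB \<Longrightarrow> y \<in> constr_V VA VB \<Longrightarrow>
  bas EA EB a1 b1 y i x = beta i (cls EA EB a1 b1 x) (cls EA EB a1 b1 y) (rl (constr_E EA EB a1 b1) x y)"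
  using irrG[of x] by (cases i; cases x; cases y) (simp_all add: rl_def ssc_def isAc_def isBc_def constr_V_def srg_irr[OF srgA] srg_irr[OF srgB])

lemma walks_WF: "x \<in> constr_V VA VB \<Longrightarrow> y \<in> constr_V VA VB \<Longrightarrow>
  walks (constr_V VA VB) (constr_E EA EB a1 b1) k x y
   = WF d lam mu k (cls EA EB a1 b1 x) (cls EA EB a1 b1 y) (rl (constr_E EA EB a1 b1) x y)"
  unfolding walks_exp WF_def using bas_beta by (intro sum.cong) auto

lemma wstar_Wf: "x \<in> constr_V VA VB \<Longrightarrow> y \<in> constr_V VA VB \<Longrightarrow>
  wstar (constr_V VA VB) (constr_E EA EB a1 b1) x y
   = Wf (2*n+2) d lam mu (cls EA EB a1 b1 x) (cls EA EB a1 b1 y) (rl (constr_E EA EB a1 b1) x y)"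
  unfolding wstar_def Wf_def mult_2 using walks_WF card_VG[OF srg_fin[OF srgA] srg_fin[OF srgB]]
    srg_card[OF srgA] srg_card[OF srgB] by simp

end

definition RCm :: "nat \<Rightarrow> nat \<Rightarrow> nat multiset" where
  "RCm n d = {#0#} + replicate_mset d 1 + replicate_mset (n - 1 - d) 2"

definition QA :: "nat \<Rightarrow> nat \<Rightarrow> nat \<Rightarrow> nat \<Rightarrow> nat \<Rightarrow> (cl \<times> nat) multiset" where
  "QA n d lam mu t = image_mset (\<lambda>(i,j). (acl i, j)) (PCm n d lam mu t) + image_mset (\<lambda>i. (bcl i, 2)) (RCm n d)
     + {#(CC, if t = 0 then 1 else 2), (PP, 2)#}"
definition QB :: "nat \<Rightarrow> nat \<Rightarrow> nat \<Rightarrow> nat \<Rightarrow> nat \<Rightarrow> (cl \<times> nat) multiset" where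
  "QB n d lam mu t = image_mset (\<lambda>(i,j). (bcl i, j)) (PCm n d lam mu t) + image_mset (\<lambda>i. (acl i, 2)) (RCm n d)
     + {#(CC, if t = 0 then 1 else 2), (PP, 2)#}"
definition QC :: "nat \<Rightarrow> nat \<Rightarrow> (cl \<times> nat) multiset" where
  "QC n d = image_mset (\<lambda>i. (acl i, if i = 0 then 1 else 2)) (RCm n d) + image_mset (\<lambda>i. (bcl i, if i = 0 then 1 else 2)) (RCm n d)
     + {#(CC, 0), (PP, 1)#}"
definition QP :: "nat \<Rightarrow> nat \<Rightarrow> (cl \<times> nat) multiset" where
  "QP n d = image_mset (\<lambda>i. (acl i, 2)) (RCm n d) + image_mset (\<lambda>i. (bcl i, 2)) (RCm n d)
     + {#(CC, 1), (PP, 0)#}"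

fun Qf :: "nat \<Rightarrow> nat \<Rightarrow> nat \<Rightarrow> nat \<Rightarrow> cl \<Rightarrow> (cl \<times> nat) multiset" where
  "Qf n d lam mu A0 = QA n d lam mu 0"
| "Qf n d lam mu A1 = QA n d lam mu 1"
| "Qf n d lam mu A2 = QA n d lam mu 2"
| "Qf n d lam mu B0 = QB n d lam mu 0"
| "Qf n d lam mu B1 = QB n d lam mu 1"
| "Qf n d lam mu B2 = QB n d lam mu 2"
| "Qf n d lam mu CC = QC n d"
| "Qf n d lam mu PP = QP n d"

lemma rlG[simp]:
  "rl (constr_E EA EB a1 b1) (InA u) (InA w) = rl EA u w"
  "rl (constr_E EA EB a1 b1) (InB v) (InB w') = rl EB v w'"
  "rl (constr_E EA EB a1 b1) (InA u) (InB w') = 2"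
  "rl (constr_E EA EB a1 b1) (InB w') (InA u) = 2"
  "rl (constr_E EA EB a1 b1) (InA u) Conn = (if u = a1 then 1 else 2)"
  "rl (constr_E EA EB a1 b1) (InB w') Conn = (if w' = b1 then 1 else 2)"
  "rl (constr_E EA EB a1 b1) Conn (InA u) = (if u = a1 then 1 else 2)"
  "rl (constr_E EA EB a1 b1) Conn (InB w') = (if w' = b1 then 1 else 2)"
  "rl (constr_E EA EB a1 b1) (InA u) Pend = 2"
  "rl (constr_E EA EB a1 b1) (InB w') Pend = 2"
  "rl (constr_E EA EB a1 b1) Pend (InA u) = 2"
  "rl (constr_E EA EB a1 b1) Pend (InB w') = 2"
  "rl (constr_E EA EB a1 b1) Conn Conn = 0"
  "rl (constr_E EA EB a1 b1) Pend Pend = 0"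
  "rl (constr_E EA EB a1 b1) Conn Pend = 1"
  "rl (constr_E EA EB a1 b1) Pend Conn = 1"
  by (auto simp: rl_def)

lemma rl0[simp]: "(rl E x y = 0) = (x = y)" by (simp add: rl_def)

lemma rl_cases: "rl E x y = 0 \<or> rl E x y = 1 \<or> rl E x y = 2" by (auto simp: rl_def)

lemma Qf_acl: "Qf n d lam mu (acl (rl E x y)) = QA n d lam mu (rl E x y)"
  using rl_cases[of E x y] by (elim disjE) (simp_all del: rl0)
lemma Qf_bcl: "Qf n d lam mu (bcl (rl E x y)) = QB n d lam mu (rl E x y)"
  using rl_cases[of E x y] by (elim disjE) (simp_all del: rl0)

lemma img_rl: "strongly_regular V E n d lam mu \<Longrightarrow> a \<in> V \<Longrightarrow>
   image_mset (\<lambda>w. f (rl E w a)) (mset_set V) = image_mset f (RCm n d)"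
proof -
  assume s: "strongly_regular V E n d lam mu" and a: "a \<in> V"
  have "image_mset (\<lambda>w. f (rl E w a)) (mset_set V) = image_mset f (image_mset (\<lambda>w. rl E w a) (mset_set V))"
    by (simp add: multiset.map_comp comp_def)
  then show ?thesis using rl_count[OF s a] by (simp add: RCm_def)
qed

lemma img_pair: "strongly_regular V E n d lam mu \<Longrightarrow> a \<in> V \<Longrightarrow> u \<in> V \<Longrightarrow>
   image_mset (\<lambda>w. f (rl E w a) (rl E u w)) (mset_set V) = image_mset (\<lambda>(i,j). f i j) (PCm n d lam mu (rl E u a))"
proof -
  assume s: "strongly_regular V E n d lam mu" and a: "a \<in> V" and u: "u \<in> V"
  have "image_mset (\<lambda>w. f (rl E w a) (rl E u w)) (mset_set V) = image_mset (\<lambda>(i,j). f i j) (image_mset (\<lambda>w. (rl E w a, rl E w u)) (mset_set V))"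
    by (simp add: multiset.map_comp comp_def rl_sym[OF s, of u])
  then show ?thesis using pair_count[OF s a u] by simp
qed

context
  fixes VA :: "'a set" and EA and VB :: "'b set" and EB and a1 b1 n d lam mu
  assumes srgA: "strongly_regular VA EA n d lam mu"
    and srgB: "strongly_regular VB EB n d lam mu"
    and a1: "a1 \<in> VA" and b1: "b1 \<in> VB"
begin

lemma Q_G: "x \<in> constr_V VA VB \<Longrightarrow>
  image_mset (\<lambda>y. (cls EA EB a1 b1 y, rl (constr_E EA EB a1 b1) x y)) (mset_set (constr_V VA VB))
   = Qf n d lam mu (cls EA EB a1 b1 x)"
proof -
  assume x: "x \<in> constr_V VA VB"
  let ?g = "\<lambda>y. (cls EA EB a1 b1 y, rl (constr_E EA EB a1 b1) x y)"
  have split: "image_mset ?g (mset_set (constr_V VA VB)) =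
     image_mset (\<lambda>w. ?g (InA w)) (mset_set VA) + image_mset (\<lambda>w. ?g (InB w)) (mset_set VB) + {#?g Conn, ?g Pend#}"
    by (simp add: mset_VG[OF srg_fin[OF srgA] srg_fin[OF srgB]] multiset.map_comp comp_def)
  from x have "(\<exists>u\<in>VA. x = InA u) \<or> (\<exists>u\<in>VB. x = InB u) \<or> x = Conn \<or> x = Pend"
    by (auto simp: constr_V_def)
  then show ?thesis
  proof (elim disjE bexE)
    fix u assume u: "u \<in> VA" and xu: "x = InA u"
    have 1: "image_mset (\<lambda>w. ?g (InA w)) (mset_set VA) = image_mset (\<lambda>(i,j). (acl i, j)) (PCm n d lam mu (rl EA u a1))"
      using img_pair[OF srgA a1 u, of "\<lambda>i j. (acl i, j)"] xu by simp
    have 2: "image_mset (\<lambda>w. ?g (InB w)) (mset_set VB) = image_mset (\<lambda>i. (bcl i, 2)) (RCm n d)"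
      using img_rl[OF srgB b1, of "\<lambda>i. (bcl i, 2)"] xu by simp
    have 3: "?g Conn = (CC, if rl EA u a1 = 0 then 1 else 2)" "?g Pend = (PP, 2)"
      using xu by auto
    show ?thesis unfolding split 1 2 3 using xu by (simp add: Qf_acl QA_def)
  next
    fix u assume u: "u \<in> VB" and xu: "x = InB u"
    have 1: "image_mset (\<lambda>w. ?g (InB w)) (mset_set VB) = image_mset (\<lambda>(i,j). (bcl i, j)) (PCm n d lam mu (rl EB u b1))"
      using img_pair[OF srgB b1 u, of "\<lambda>i j. (bcl i, j)"] xu by simp
    have 2: "image_mset (\<lambda>w. ?g (InA w)) (mset_set VA) = image_mset (\<lambda>i. (acl i, 2)) (RCm n d)"
      using img_rl[OF srgA a1, of "\<lambda>i. (acl i, 2)"] xu by simp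
    have 3: "?g Conn = (CC, if rl EB u b1 = 0 then 1 else 2)" "?g Pend = (PP, 2)"
      using xu by auto
    show ?thesis unfolding split 1 2 3 using xu by (simp add: Qf_bcl QB_def add.commute add.left_commute)
  next
    assume xc: "x = Conn"
    have 1: "image_mset (\<lambda>w. ?g (InA w)) (mset_set VA) = image_mset (\<lambda>i. (acl i, if i = 0 then 1 else 2)) (RCm n d)"
      using img_rl[OF srgA a1, of "\<lambda>i. (acl i, if i = 0 then 1 else 2)"] xc by simp
    have 2: "image_mset (\<lambda>w. ?g (InB w)) (mset_set VB) = image_mset (\<lambda>i. (bcl i, if i = 0 then 1 else 2)) (RCm n d)"
      using img_rl[OF srgB b1, of "\<lambda>i. (bcl i, if i = 0 then 1 else 2)"] xc by simp
    show ?thesis unfolding split 1 2 using xc by (simp add: QC_def)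
  next
    assume xc: "x = Pend"
    have 1: "image_mset (\<lambda>w. ?g (InA w)) (mset_set VA) = image_mset (\<lambda>i. (acl i, 2)) (RCm n d)"
      using img_rl[OF srgA a1, of "\<lambda>i. (acl i, 2)"] xc by simp
    have 2: "image_mset (\<lambda>w. ?g (InB w)) (mset_set VB) = image_mset (\<lambda>i. (bcl i, 2)) (RCm n d)"
      using img_rl[OF srgB b1, of "\<lambda>i. (bcl i, 2)"] xc by simp
    show ?thesis unfolding split 1 2 using xc by (simp add: QP_def)
  qed
qed

end

definition CLm :: "nat \<Rightarrow> nat \<Rightarrow> cl multiset" where
  "CLm n d = image_mset acl (RCm n d) + image_mset bcl (RCm n d) + {#CC, PP#}"

context
  fixes VA :: "'a set" and EA and VB :: "'b set" and EB and a1 b1 n d lam mu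
  assumes srgA: "strongly_regular VA EA n d lam mu"
    and srgB: "strongly_regular VB EB n d lam mu"
    and a1: "a1 \<in> VA" and b1: "b1 \<in> VB"
begin

lemma omega_G: "x \<in> constr_V VA VB \<Longrightarrow> omega (constr_V VA VB) (constr_E EA EB a1 b1) r x
   = omF (Wf (2*n+2) d lam mu) (Qf n d lam mu) r (cls EA EB a1 b1 x)"
  by (rule omega_cls[where rel = "rl (constr_E EA EB a1 b1)"])
     (auto simp: fin_VG srg_fin[OF srgA] srg_fin[OF srgB] wstar_Wf[OF srgA srgB a1 b1] Q_G[OF srgA srgB a1 b1])

lemma omega_ms_G: "omega_ms (constr_V VA VB) (constr_E EA EB a1 b1) r
   = image_mset (omF (Wf (2*n+2) d lam mu) (Qf n d lam mu) r) (CLm n d)"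
proof -
  have fin: "finite (constr_V VA VB :: ('a,'b) gvert set)" by (simp add: fin_VG srg_fin[OF srgA] srg_fin[OF srgB])
  have "omega_ms (constr_V VA VB) (constr_E EA EB a1 b1) r
      = image_mset (omF (Wf (2*n+2) d lam mu) (Qf n d lam mu) r \<circ> cls EA EB a1 b1) (mset_set (constr_V VA VB))"
    unfolding omega_ms_def using omega_G fin by (intro multiset.map_cong0) auto
  also have "\<dots> = image_mset (omF (Wf (2*n+2) d lam mu) (Qf n d lam mu) r) (image_mset (cls EA EB a1 b1) (mset_set (constr_V VA VB)))"
    by (simp add: multiset.map_comp)
  also have "image_mset (cls EA EB a1 b1) (mset_set (constr_V VA VB)) = CLm n d"
  proof -
    have "image_mset (cls EA EB a1 b1) (mset_set (constr_V VA VB))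
       = image_mset (\<lambda>w. acl (rl EA w a1)) (mset_set VA) + image_mset (\<lambda>w. bcl (rl EB w b1)) (mset_set VB) + {#CC, PP#}"
      by (simp add: mset_VG[OF srg_fin[OF srgA] srg_fin[OF srgB]] multiset.map_comp comp_def)
    then show ?thesis using img_rl[OF srgA a1, of acl] img_rl[OF srgB b1, of bcl] by (simp add: CLm_def)
  qed
  finally show ?thesis .
qed

end

lemma part1:
  assumes "strongly_regular VA EA n d lam mu"
    and "strongly_regular VB EB n d lam mu"
    and "a1 \<in> VA" and "b1 \<in> VB"
  shows "(\<forall>r. omega_ms (constr_V VA VB) (constr_E EA EB a1 b1) r
              = omega_ms (constr_V VA VA) (constr_E EA EA a1 a1) r)
       \<and> omega_bullet (constr_V VA VB) (constr_E EA EB a1 b1)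
              = omega_bullet (constr_V VA VA) (constr_E EA EA a1 a1)"
proof -
  have r: "\<And>r. omega_ms (constr_V VA VB) (constr_E EA EB a1 b1) r
              = omega_ms (constr_V VA VA) (constr_E EA EA a1 a1) r"
    using omega_ms_G[OF assms] omega_ms_G[OF assms(1) assms(1) assms(3) assms(3)] by simp
  have c: "card (constr_V VA VB) = card (constr_V VA VA)"
    using card_VG[OF srg_fin[OF assms(1)] srg_fin[OF assms(2)]] card_VG[OF srg_fin[OF assms(1)] srg_fin[OF assms(1)]]
      srg_card[OF assms(1)] srg_card[OF assms(2)] by simp
  show ?thesis using r c unfolding omega_bullet_def by simp
qed


fun prv :: "'c crcol \<Rightarrow> 'c crcol" where "prv (C0 a) = C0 a" | "prv (CS h M) = h"
fun nbm :: "'c crcol \<Rightarrow> 'c crcol multiset" where "nbm (C0 a) = {#}" | "nbm (CS h M) = M"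
primrec ini :: "'c crcol \<Rightarrow> 'c" where "ini (C0 a) = a" | "ini (CS h M) = ini h"
definition deg :: "'c crcol \<Rightarrow> nat" where "deg c = size (nbm c)"

fun rch :: "nat \<Rightarrow> 'c option crcol \<Rightarrow> bool" where
  "rch 0 c = (ini c = None)"
| "rch (Suc k) c = (rch k (prv c) \<or> (\<exists>m\<in>#nbm c. rch k m))"

definition isCc :: "'c crcol \<Rightarrow> bool" where
  "isCc c = (deg c = 3 \<and> (\<exists>m\<in>#nbm c. deg m = 1))"
definition isPc :: "'c crcol \<Rightarrow> bool" where
  "isPc c = (deg c = 1 \<and> (\<exists>m\<in>#nbm c. isCc m))"
definition isAc' :: "'c option crcol \<Rightarrow> bool" where
  "isAc' c = (rch 2 c \<and> \<not> isCc c \<and> (rch 0 c \<or> \<not> (\<exists>m\<in>#nbm c. isCc m \<and> rch 1 m)))"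

fun grch :: "'v set \<Rightarrow> ('v \<Rightarrow> 'v \<Rightarrow> bool) \<Rightarrow> 'v \<Rightarrow> nat \<Rightarrow> 'v \<Rightarrow> bool" where
  "grch V E x 0 v = (v = x)"
| "grch V E x (Suc k) v = (grch V E x k v \<or> (\<exists>w\<in>nbrs V E v. grch V E x k w))"

lemma ini_cref[simp]: "ini (cref V E col r v) = col v" by (induction r) auto
lemma prv_cref[simp]: "prv (cref V E col (Suc r) v) = cref V E col r v" by simp
lemma nbm_cref[simp]: "nbm (cref V E col (Suc r) v) = image_mset (cref V E col r) (mset_set (nbrs V E v))" by simp
lemma deg_cref: "finite V \<Longrightarrow> deg (cref V E col (Suc r) v) = card (nbrs V E v)"
  by (simp add: deg_def finite_nbrs)

lemma rch_cref: "finite V \<Longrightarrow> (\<And>v. col v = None \<longleftrightarrow> v = x) \<Longrightarrow> k \<le> r \<Longrightarrow>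
  rch k (cref V E col r v) = grch V E x k v"
proof (induction k arbitrary: r v)
  case 0 then show ?case by simp
next
  case (Suc k)
  then obtain r' where r: "r = Suc r'" by (cases r) auto
  have "(\<exists>m\<in>#nbm (cref V E col r v). rch k m) = (\<exists>w\<in>nbrs V E v. grch V E x k w)"
    using Suc r by (auto simp: finite_nbrs)
  then show ?case using Suc r by simp
qed

fun dec :: "nat \<Rightarrow> nat \<Rightarrow> nat option crcol \<Rightarrow> nat option crcol" where
  "dec d 0 c = C0 (if ini c = None then None else if deg c = d + 1 then Some 1 else Some 0)"
| "dec d (Suc r) c = CS (dec d r (prv c)) (image_mset (dec d r) (filter_mset (\<lambda>m. \<not> isCc m) (nbm c)))"

definition Phi :: "nat \<Rightarrow> nat \<Rightarrow> nat option crcol multiset \<Rightarrow> nat option crcol multiset option" where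
  "Phi n d M = (if \<exists>c\<in>#M. ini c = None \<and> (isCc c \<or> isPc c) then None
      else Some (image_mset (\<lambda>c. (prv ^^ n) (dec d (2*n) c)) (filter_mset isAc' M)))"

lemma prv_pow: "(prv ^^ k) (cref V E col (k + r) v) = cref V E col r v"
  by (induction k) (simp_all add: funpow_Suc_right del: funpow.simps)


locale GG =
  fixes VA :: "'a set" and EA and VB :: "'b set" and EB and a1 b1 and d :: nat
  assumes sgA: "simple_graph VA EA" and sgB: "simple_graph VB EB"
    and regA: "\<And>u. u \<in> VA \<Longrightarrow> card (nbrs VA EA u) = d"
    and regB: "\<And>u. u \<in> VB \<Longrightarrow> card (nbrs VB EB u) = d"
    and a1: "a1 \<in> VA" and b1: "b1 \<in> VB"
begin

abbreviation "V \<equiv> constr_V VA VB"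
abbreviation "EG \<equiv> constr_E EA EB a1 b1"

lemma finA: "finite VA" using sgA by (simp add: simple_graph_def)
lemma finB: "finite VB" using sgB by (simp add: simple_graph_def)
lemma EAV: "EA x y \<Longrightarrow> x \<in> VA \<and> y \<in> VA" using sgA by (simp add: simple_graph_def)
lemma EBV: "EB x y \<Longrightarrow> x \<in> VB \<and> y \<in> VB" using sgB by (simp add: simple_graph_def)
lemma finV: "finite V" using finA finB by (simp add: fin_VG)

lemma nbG1: "nbrs V EG (InA u) = InA ` nbrs VA EA u \<union> (if u = a1 then {Conn} else {})"
  by (rule nbrs_InA) (auto dest: EAV EBV intro: a1 b1)
lemma nbG2: "nbrs V EG (InB u) = InB ` nbrs VB EB u \<union> (if u = b1 then {Conn} else {})"
  by (rule nbrs_InB) (auto dest: EAV EBV intro: a1 b1)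
lemma nbG3: "nbrs V EG Conn = {InA a1, InB b1, Pend}"
  by (rule nbrs_Conn) (auto dest: EAV EBV intro: a1 b1)
lemma nbG4: "nbrs V EG Pend = {Conn}"
  by (rule nbrs_Pend) (auto dest: EAV EBV intro: a1 b1)
lemmas nbG = nbG1 nbG2 nbG3 nbG4

lemma cardA: "u \<in> VA \<Longrightarrow> card (nbrs V EG (InA u)) = d + of_bool (u = a1)"
proof -
  assume u: "u \<in> VA"
  have f: "finite (nbrs VA EA u)" using finite_nbrs[OF finA] .
  have "card (InA ` nbrs VA EA u \<union> (if u = a1 then {Conn} else {}) :: ('a,'b) gvert set)
      = card (InA ` nbrs VA EA u :: ('a,'b) gvert set) + card (if u = a1 then {Conn} else {} :: ('a,'b) gvert set)"
    using f by (intro card_Un_disjoint) auto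
  moreover have "card (InA ` nbrs VA EA u :: ('a,'b) gvert set) = d"
    using regA[OF u] by (subst card_image) (auto simp: inj_on_def)
  ultimately show ?thesis unfolding nbG by simp
qed

lemma cardB: "u \<in> VB \<Longrightarrow> card (nbrs V EG (InB u)) = d + of_bool (u = b1)"
proof -
  assume u: "u \<in> VB"
  have f: "finite (nbrs VB EB u)" using finite_nbrs[OF finB] .
  have "card (InB ` nbrs VB EB u \<union> (if u = b1 then {Conn} else {}) :: ('a,'b) gvert set)
      = card (InB ` nbrs VB EB u :: ('a,'b) gvert set) + card (if u = b1 then {Conn} else {} :: ('a,'b) gvert set)"
    using f by (intro card_Un_disjoint) auto
  moreover have "card (InB ` nbrs VB EB u :: ('a,'b) gvert set) = d"
    using regB[OF u] by (subst card_image) (auto simp: inj_on_def)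
  ultimately show ?thesis unfolding nbG by simp
qed

lemma cardC: "card (nbrs V EG Conn) = 3" unfolding nbG by simp
lemma cardP: "card (nbrs V EG Pend) = 1" unfolding nbG by simp

lemma nbA_in: "w \<in> nbrs VA EA u \<Longrightarrow> w \<in> VA" by (simp add: nbrs_def)
lemma nbB_in: "w \<in> nbrs VB EB u \<Longrightarrow> w \<in> VB" by (simp add: nbrs_def)

lemma nbA_cases: "w \<in> nbrs V EG (InA u) \<Longrightarrow> w = Conn \<or> (\<exists>w'. w' \<in> VA \<and> w = InA w')"
  unfolding nbG1 by (auto simp: nbrs_def split: if_splits)
lemma nbB_cases: "w \<in> nbrs V EG (InB u) \<Longrightarrow> w = Conn \<or> (\<exists>w'. w' \<in> VB \<and> w = InB w')"
  unfolding nbG2 by (auto simp: nbrs_def split: if_splits)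
lemma Conn_nbA: "(Conn \<in> nbrs V EG (InA u)) = (u = a1)" unfolding nbG1 by auto
lemma Conn_nbB: "(Conn \<in> nbrs V EG (InB u)) = (u = b1)" unfolding nbG2 by auto

lemma Ccond: "v \<in> V \<Longrightarrow> (card (nbrs V EG v) = 3 \<and> (\<exists>w\<in>nbrs V EG v. card (nbrs V EG w) = 1)) = (v = Conn)"
proof -
  assume v: "v \<in> V"
  from v have "(\<exists>u\<in>VA. v = InA u) \<or> (\<exists>u\<in>VB. v = InB u) \<or> v = Conn \<or> v = Pend"
    by (auto simp: constr_V_def)
  then show ?thesis
  proof (elim disjE bexE)
    fix u assume u: "u \<in> VA" and vu: "v = InA u"
    { fix w assume c3: "card (nbrs V EG v) = 3" and w: "w \<in> nbrs V EG v" and c1: "card (nbrs V EG w) = 1"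
      have "d \<ge> 2" using c3 cardA[OF u] vu by (cases "u = a1") simp_all
      moreover from w vu have "w = Conn \<or> (\<exists>w'. w' \<in> VA \<and> w = InA w')" by (simp add: nbA_cases)
      ultimately have False
      proof (elim disjE exE conjE)
        assume "w = Conn" then show False using c1 cardC by simp
      next
        fix w' assume "w' \<in> VA" "w = InA w'" "d \<ge> 2"
        then show False using c1 cardA[of w'] by (cases "w' = a1") simp_all
      qed }
    then show ?thesis using vu by auto
  next
    fix u assume u: "u \<in> VB" and vu: "v = InB u"
    { fix w assume c3: "card (nbrs V EG v) = 3" and w: "w \<in> nbrs V EG v" and c1: "card (nbrs V EG w) = 1"
      have "d \<ge> 2" using c3 cardB[OF u] vu by (cases "u = b1") simp_all
      moreover from w vu have "w = Conn \<or> (\<exists>w'. w' \<in> VB \<and> w = InB w')" by (simp add: nbB_cases)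
      ultimately have False
      proof (elim disjE exE conjE)
        assume "w = Conn" then show False using c1 cardC by simp
      next
        fix w' assume "w' \<in> VB" "w = InB w'" "d \<ge> 2"
        then show False using c1 cardB[of w'] by (cases "w' = b1") simp_all
      qed }
    then show ?thesis using vu by auto
  next
    assume vc: "v = Conn"
    have "Pend \<in> nbrs V EG Conn" by (simp add: nbG3)
    then show ?thesis using vc cardC cardP by auto
  next
    assume "v = Pend" then show ?thesis using cardP by auto
  qed
qed

lemma isCc_G: "v \<in> V \<Longrightarrow> 2 \<le> r \<Longrightarrow> isCc (cref V EG col r v) = (v = Conn)"
proof -
  assume v: "v \<in> V" and r: "2 \<le> r"
  then obtain r' where r': "r = Suc (Suc r')" by (metis add_2_eq_Suc le_Suc_ex)
  have "isCc (cref V EG col r v) = (card (nbrs V EG v) = 3 \<and> (\<exists>w\<in>nbrs V EG v. card (nbrs V EG w) = 1))"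
    unfolding isCc_def r' using finV by (simp add: deg_def finite_nbrs)
  then show ?thesis using Ccond[OF v] by simp
qed

lemma Pcond: "v \<in> V \<Longrightarrow> 1 \<le> d \<Longrightarrow> (card (nbrs V EG v) = 1 \<and> (\<exists>w\<in>nbrs V EG v. w = Conn)) = (v = Pend)"
proof -
  assume v: "v \<in> V" and d: "1 \<le> d"
  from v have "(\<exists>u\<in>VA. v = InA u) \<or> (\<exists>u\<in>VB. v = InB u) \<or> v = Conn \<or> v = Pend"
    by (auto simp: constr_V_def)
  then show ?thesis
  proof (elim disjE bexE)
    fix u assume u: "u \<in> VA" and vu: "v = InA u"
    show ?thesis using vu cardA[OF u] d Conn_nbA[of u] by auto
  next
    fix u assume u: "u \<in> VB" and vu: "v = InB u"
    show ?thesis using vu cardB[OF u] d Conn_nbB[of u] by auto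
  next
    assume "v = Conn" then show ?thesis using cardC by auto
  next
    assume "v = Pend" then show ?thesis using cardP by (auto simp: nbG4)
  qed
qed

lemma isPc_G: "v \<in> V \<Longrightarrow> 3 \<le> r \<Longrightarrow> 1 \<le> d \<Longrightarrow> isPc (cref V EG col r v) = (v = Pend)"
proof -
  assume v: "v \<in> V" and r: "3 \<le> r" and d: "1 \<le> d"
  then obtain r' where r': "r = Suc r'" "2 \<le> r'" by (cases r) auto
  have nV: "\<And>w. w \<in> nbrs V EG v \<Longrightarrow> w \<in> V" by (simp add: nbrs_def)
  have fn: "finite (nbrs V EG v)" by (rule finite_nbrs[OF finV])
  have dg: "deg (cref V EG col r v) = card (nbrs V EG v)"
    unfolding r'(1) deg_def nbm_cref using fn by simp
  have ex: "(\<exists>m\<in>#nbm (cref V EG col r v). isCc m) = (\<exists>w\<in>nbrs V EG v. isCc (cref V EG col r' w))"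
    unfolding r'(1) nbm_cref using fn by simp
  have ex2: "(\<exists>w\<in>nbrs V EG v. isCc (cref V EG col r' w)) = (\<exists>w\<in>nbrs V EG v. w = Conn)"
    using isCc_G[OF nV r'(2)] by blast
  show ?thesis unfolding isPc_def dg ex ex2 using Pcond[OF v d] .
qed

end

context GG begin

lemma phi_CP:
  assumes v: "v = Conn \<or> v = Pend" and d: "1 \<le> d" and N: "3 \<le> card V"
  shows "Phi n d (WL1 V EG (indiv uncolored v)) = None"
proof -
  have vV: "v \<in> V" using v by (auto simp: constr_V_def)
  let ?c = "cref V EG (indiv uncolored v) (card V) v"
  have "?c \<in># WL1 V EG (indiv uncolored v)" unfolding WL1_def using vV finV by simp
  moreover have "ini ?c = None" by (simp add: indiv_def)
  moreover have "isCc ?c \<or> isPc ?c"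
  proof (cases "v = Conn")
    case True then show ?thesis using isCc_G[OF vV, of "card V" "indiv uncolored v"] N by simp
  next
    case False then have "v = Pend" using v by simp
    then show ?thesis using isPc_G[OF vV, of "card V" "indiv uncolored v"] N d by simp
  qed
  ultimately have "\<exists>c\<in>#WL1 V EG (indiv uncolored v). ini c = None \<and> (isCc c \<or> isPc c)" by blast
  then show ?thesis unfolding Phi_def by simp
qed

end

locale GX = GG +
  fixes x0
  assumes x0: "x0 \<in> VA"
    and rad: "\<And>u. u \<in> VA \<Longrightarrow> u = x0 \<or> EA x0 u \<or> (\<exists>w. EA x0 w \<and> EA w u)"
begin

abbreviation "colG \<equiv> indiv uncolored (InA x0) :: ('a,'b) gvert \<Rightarrow> nat option"
abbreviation "colA \<equiv> indiv (single_col a1) x0"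
abbreviation "gr \<equiv> grch V EG (InA x0)"

lemma colG_None: "colG v = None \<longleftrightarrow> v = InA x0" by (simp add: indiv_def)

lemma symA: "EA x y \<Longrightarrow> EA y x" using sgA by (simp add: simple_graph_def)

lemma gr1: "gr 1 v = (v = InA x0 \<or> InA x0 \<in> nbrs V EG v)" by auto

lemma gr1C: "gr 1 Conn = (x0 = a1)" by (auto simp: nbG3)

lemma gr2A: "u \<in> VA \<Longrightarrow> gr 2 (InA u)"
proof -
  assume u: "u \<in> VA"
  have "InA x0 \<in> nbrs V EG (InA u)" if "EA x0 u" using that symA EAV x0 by (auto simp: nbG1 nbrs_def constr_V_def)
  moreover have "InA w \<in> nbrs V EG (InA u)" if "EA w u" for w using that symA EAV by (auto simp: nbG1 nbrs_def constr_V_def)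
  moreover have "InA x0 \<in> nbrs V EG (InA w)" if "EA x0 w" for w using that symA EAV by (auto simp: nbG1 nbrs_def constr_V_def)
  ultimately show ?thesis using rad[OF u] x0 by (auto simp: numeral_2_eq_2)
qed

lemma gr1B: "\<not> gr 1 (InB u)" by (auto simp: nbG2)
lemma gr1P: "\<not> gr 1 Pend" by (auto simp: nbG4)

lemma gr2B: "gr 2 (InB u) \<Longrightarrow> u = b1 \<and> x0 = a1"
proof -
  assume "gr 2 (InB u)"
  then have "gr 1 (InB u) \<or> (\<exists>w\<in>nbrs V EG (InB u). gr 1 w)" by (simp add: numeral_2_eq_2)
  then obtain w where w: "w \<in> nbrs V EG (InB u)" "gr 1 w" using gr1B by blast
  from w(1) have "w = Conn \<or> (\<exists>w'. w' \<in> VB \<and> w = InB w')" by (rule nbB_cases)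
  then have "w = Conn" using w(2) gr1B by blast
  then show ?thesis using w gr1C Conn_nbB by auto
qed

lemma gr2P: "gr 2 Pend \<Longrightarrow> x0 = a1"
proof -
  assume "gr 2 Pend"
  then have "gr 1 Pend \<or> (\<exists>w\<in>nbrs V EG Pend. gr 1 w)" by (simp add: numeral_2_eq_2)
  then show ?thesis using gr1P gr1C by (auto simp: nbG4)
qed

definition PA :: "('a,'b) gvert \<Rightarrow> bool" where
  "PA v = (gr 2 v \<and> v \<noteq> Conn \<and> (gr 0 v \<or> \<not> (\<exists>w\<in>nbrs V EG v. w = Conn \<and> gr 1 w)))"

lemma PA_iff: "v \<in> V \<Longrightarrow> PA v = (\<exists>u\<in>VA. v = InA u)"
proof -
  assume v: "v \<in> V"
  from v have "(\<exists>u\<in>VA. v = InA u) \<or> (\<exists>u\<in>VB. v = InB u) \<or> v = Conn \<or> v = Pend"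
    by (auto simp: constr_V_def)
  then show ?thesis
  proof (elim disjE bexE)
    fix u assume u: "u \<in> VA" and vu: "v = InA u"
    have "gr 0 v \<or> \<not> (\<exists>w\<in>nbrs V EG v. w = Conn \<and> gr 1 w)"
      using vu gr1C Conn_nbA[of u] by auto
    then show ?thesis unfolding PA_def using gr2A[OF u] vu u by auto
  next
    fix u assume u: "u \<in> VB" and vu: "v = InB u"
    have "\<not> PA v"
    proof
      assume pa: "PA v"
      then have "u = b1 \<and> x0 = a1" using gr2B vu by (auto simp: PA_def)
      then have g: "gr 1 Conn" using gr1C by simp
      have c: "Conn \<in> nbrs V EG v" using vu \<open>u = b1 \<and> x0 = a1\<close> Conn_nbB[of u] by simp
      have "\<not> gr 0 v" using vu by simp
      then show False using pa g c unfolding PA_def by blast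
    qed
    then show ?thesis using vu by auto
  next
    assume "v = Conn" then show ?thesis by (auto simp: PA_def)
  next
    assume vp: "v = Pend"
    have "\<not> PA v"
    proof
      assume pa: "PA v"
      then have "x0 = a1" using gr2P vp by (auto simp: PA_def)
      then have g: "gr 1 Conn" using gr1C by simp
      have c: "Conn \<in> nbrs V EG v" using vp by (simp add: nbG4)
      have "\<not> gr 0 v" using vp by simp
      then show False using pa g c unfolding PA_def by blast
    qed
    then show ?thesis using vp by auto
  qed
qed

lemma isAc'_G: "v \<in> V \<Longrightarrow> 3 \<le> r \<Longrightarrow> isAc' (cref V EG colG r v) = PA v"
proof -
  assume v: "v \<in> V" and r: "3 \<le> r"
  then obtain r' where r': "r = Suc r'" "2 \<le> r'" by (cases r) auto
  have nV: "\<And>w. w \<in> nbrs V EG v \<Longrightarrow> w \<in> V" by (simp add: nbrs_def)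
  have fn: "finite (nbrs V EG v)" by (rule finite_nbrs[OF finV])
  have R: "\<And>k u. k \<le> r \<Longrightarrow> rch k (cref V EG colG r u) = gr k u"
    by (rule rch_cref[OF finV colG_None])
  have R': "\<And>k u. k \<le> r' \<Longrightarrow> rch k (cref V EG colG r' u) = gr k u"
    by (rule rch_cref[OF finV colG_None])
  have ex: "(\<exists>m\<in>#nbm (cref V EG colG r v). isCc m \<and> rch 1 m) = (\<exists>w\<in>nbrs V EG v. w = Conn \<and> gr 1 w)"
  proof -
    have "(\<exists>m\<in>#nbm (cref V EG colG r v). isCc m \<and> rch 1 m)
        = (\<exists>w\<in>nbrs V EG v. isCc (cref V EG colG r' w) \<and> rch 1 (cref V EG colG r' w))"
      unfolding r'(1) nbm_cref using fn by simp
    also have "\<dots> = (\<exists>w\<in>nbrs V EG v. w = Conn \<and> gr 1 w)"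
      using isCc_G[OF nV r'(2)] R'[of 1] r'(2) by auto
    finally show ?thesis .
  qed
  have ic: "isCc (cref V EG colG r v) = (v = Conn)" using isCc_G[OF v, of r colG] r by simp
  have r2: "rch 2 (cref V EG colG r v) = gr 2 v" using R[of 2 v] r by simp
  have r0: "rch 0 (cref V EG colG r v) = gr 0 v" using R[of 0 v] by simp
  show ?thesis by (simp only: isAc'_def PA_def ex ic r2 r0)
qed

lemma dec_G: "u \<in> VA \<Longrightarrow> dec d r (cref V EG colG (r + 2) (InA u)) = cref VA EA colA r u"
proof (induction r arbitrary: u)
  case 0
  have uV: "InA u \<in> V" using 0 by (simp add: constr_V_def)
  have dg: "deg (cref V EG colG 2 (InA u)) = d + of_bool (u = a1)"
    using cardA[OF 0] finV by (simp add: numeral_2_eq_2 deg_def finite_nbrs)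
  have "dec d 0 (cref V EG colG (0 + 2) (InA u)) = C0 (if colG (InA u) = None then None
      else if deg (cref V EG colG 2 (InA u)) = d + 1 then Some 1 else Some 0)"
    by (simp only: dec.simps ini_cref add_0)
  then show ?case unfolding dg by (simp add: indiv_def single_col_def uncolored_def)
next
  case (Suc r)
  have fn: "finite (nbrs V EG (InA u))" by (rule finite_nbrs[OF finV])
  have fnA: "finite (nbrs VA EA u)" by (rule finite_nbrs[OF finA])
  have nV: "\<And>w. w \<in> nbrs V EG (InA u) \<Longrightarrow> w \<in> V" by (simp add: nbrs_def)
  have r2: "2 \<le> r + 2" by simp
  have "filter_mset (\<lambda>m. \<not> isCc m) (image_mset (cref V EG colG (r+2)) (mset_set (nbrs V EG (InA u))))
      = image_mset (cref V EG colG (r+2)) (filter_mset (\<lambda>w. \<not> isCc (cref V EG colG (r+2) w)) (mset_set (nbrs V EG (InA u))))"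
    by (simp add: filter_mset_image_mset comp_def)
  also have "filter_mset (\<lambda>w. \<not> isCc (cref V EG colG (r+2) w)) (mset_set (nbrs V EG (InA u)))
      = filter_mset (\<lambda>w. w \<noteq> Conn) (mset_set (nbrs V EG (InA u)))"
    using isCc_G[OF nV r2] fn by (intro filter_mset_cong) auto
  also have "\<dots> = mset_set {w\<in>nbrs V EG (InA u). w \<noteq> Conn}"
    using fn by (simp add: filter_mset_mset_set)
  also have "{w\<in>nbrs V EG (InA u). w \<noteq> Conn} = InA ` nbrs VA EA u"
    by (auto simp: nbG1)
  also have "mset_set (InA ` nbrs VA EA u :: ('a,'b) gvert set) = image_mset InA (mset_set (nbrs VA EA u))"
    by (rule image_mset_mset_set[symmetric]) (auto simp: inj_on_def)
  finally have F: "filter_mset (\<lambda>m. \<not> isCc m) (image_mset (cref V EG colG (r+2)) (mset_set (nbrs V EG (InA u))))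
     = image_mset (\<lambda>w. cref V EG colG (r+2) (InA w)) (mset_set (nbrs VA EA u))"
    by (simp only: multiset.map_comp comp_def)
  have I: "image_mset (dec d r) (image_mset (\<lambda>w. cref V EG colG (r+2) (InA w)) (mset_set (nbrs VA EA u)))
     = image_mset (cref VA EA colA r) (mset_set (nbrs VA EA u))"
    unfolding multiset.map_comp comp_def
    by (rule multiset.map_cong0) (use Suc.IH fnA in \<open>auto simp: nbrs_def\<close>)
  have e: "Suc r + 2 = Suc (r + 2)" by simp
  have C: "cref V EG colG (Suc r + 2) (InA u) = CS (cref V EG colG (r+2) (InA u)) (image_mset (cref V EG colG (r+2)) (mset_set (nbrs V EG (InA u))))"
    by (simp only: e cref.simps(2))
  have D: "dec d (Suc r) (cref V EG colG (Suc r + 2) (InA u)) = CS (dec d r (cref V EG colG (r+2) (InA u)))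
     (image_mset (dec d r) (filter_mset (\<lambda>m. \<not> isCc m) (image_mset (cref V EG colG (r+2)) (mset_set (nbrs V EG (InA u))))))"
    unfolding C by (simp only: dec.simps prv.simps nbm.simps)
  have R: "cref VA EA colA (Suc r) u = CS (cref VA EA colA r u) (image_mset (cref VA EA colA r) (mset_set (nbrs VA EA u)))"
    by (simp only: cref.simps)
  show ?case unfolding D R F I Suc.IH[OF Suc.prems] ..
qed

end

context GX begin

lemma phi_A:
  assumes cA: "card VA = n" and cB: "card VB = n" and d: "1 \<le> d"
  shows "Phi n d (WL1 V EG colG) = Some (WL1 VA EA colA)"
proof -
  have cV: "card V = 2*n + 2" using card_VG[OF finA finB] cA cB by simp
  have n1: "1 \<le> n" using cA a1 finA by (metis One_nat_def Suc_leI card_gt_0_iff empty_iff)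
  have N3: "3 \<le> 2*n+2" using n1 by simp
  let ?N = "2*n+2"
  have M: "WL1 V EG colG = image_mset (cref V EG colG ?N) (mset_set V)" unfolding WL1_def cV ..
  have xV: "InA x0 \<in> V" using x0 by (simp add: constr_V_def)
  have nc: "\<not> (\<exists>c\<in>#WL1 V EG colG. ini c = None \<and> (isCc c \<or> isPc c))"
  proof
    assume "\<exists>c\<in>#WL1 V EG colG. ini c = None \<and> (isCc c \<or> isPc c)"
    then obtain v where v: "v \<in> V" and c: "ini (cref V EG colG ?N v) = None \<and> (isCc (cref V EG colG ?N v) \<or> isPc (cref V EG colG ?N v))"
      unfolding M using finV by auto
    then have vx: "v = InA x0" by (simp add: indiv_def split: if_splits)
    show False using c isCc_G[OF xV, of ?N colG] isPc_G[OF xV N3 d, of colG] vx N3 by simp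
  qed
  have F: "filter_mset isAc' (WL1 V EG colG) = image_mset (\<lambda>u. cref V EG colG ?N (InA u)) (mset_set VA)"
  proof -
    have "filter_mset isAc' (WL1 V EG colG) = image_mset (cref V EG colG ?N) (filter_mset (\<lambda>v. isAc' (cref V EG colG ?N v)) (mset_set V))"
      unfolding M by (simp add: filter_mset_image_mset comp_def)
    also have "filter_mset (\<lambda>v. isAc' (cref V EG colG ?N v)) (mset_set V) = filter_mset PA (mset_set V)"
      using isAc'_G[OF _ N3] finV by (intro filter_mset_cong) (auto simp del: cref.simps)
    also have "\<dots> = mset_set {v\<in>V. PA v}" using finV by (simp add: filter_mset_mset_set)
    also have "{v\<in>V. PA v} = InA ` VA" using PA_iff by (auto simp: constr_V_def)
    also have "mset_set (InA ` VA :: ('a,'b) gvert set) = image_mset InA (mset_set VA)"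
      by (rule image_mset_mset_set[symmetric]) (auto simp: inj_on_def)
    finally show ?thesis by (simp only: multiset.map_comp comp_def)
  qed
  have D: "image_mset (\<lambda>c. (prv ^^ n) (dec d (2*n) c)) (image_mset (\<lambda>u. cref V EG colG ?N (InA u)) (mset_set VA))
      = image_mset (cref VA EA colA n) (mset_set VA)"
  proof -
    have "\<And>u. u \<in> VA \<Longrightarrow> (prv ^^ n) (dec d (2*n) (cref V EG colG ?N (InA u))) = cref VA EA colA n u"
    proof -
      fix u assume u: "u \<in> VA"
      have "(prv ^^ n) (dec d (2*n) (cref V EG colG (2*n + 2) (InA u))) = (prv ^^ n) (cref VA EA colA (n + n) u)"
        using dec_G[OF u, of "2*n"] by (simp add: mult_2)
      also have "\<dots> = cref VA EA colA n u" by (rule prv_pow)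
      finally show "(prv ^^ n) (dec d (2*n) (cref V EG colG ?N (InA u))) = cref VA EA colA n u" .
    qed
    then show ?thesis unfolding multiset.map_comp comp_def
      by (intro multiset.map_cong0) (use finA in auto)
  qed
  show ?thesis unfolding Phi_def using nc F D by (simp add: WL1_def cA)
qed

end

lemma WL1_iso:
  assumes fin: "finite V" and bij: "bij_betw f V V'"
    and edg: "\<And>x y. x \<in> V \<Longrightarrow> y \<in> V \<Longrightarrow> E' (f x) (f y) = E x y"
    and EV': "\<And>x y. E' x y \<Longrightarrow> x \<in> V' \<and> y \<in> V'"
    and col: "\<And>x. x \<in> V \<Longrightarrow> col' (f x) = col x"
  shows "WL1 V' E' col' = WL1 V E col"
proof -
  have V': "V' = f ` V" using bij by (simp add: bij_betw_def)
  have inj: "inj_on f V" using bij by (simp add: bij_betw_def)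
  have c: "card V' = card V" using bij by (simp add: bij_betw_same_card)
  have "WL1 V' E' col' = image_mset (cref V' E' col' (card V)) (image_mset f (mset_set V))"
    unfolding WL1_def V' using inj by (simp add: image_mset_mset_set card_image)
  also have "\<dots> = image_mset (cref V E col (card V)) (mset_set V)"
    unfolding multiset.map_comp comp_def
    by (rule multiset.map_cong0) (use cref_iso[where V=V and f=f and V'=V' and E=E and E'=E' and col=col and col'=col', OF fin bij edg EV' col] fin in auto)
  finally show ?thesis unfolding WL1_def .
qed

fun swp :: "('a,'b) gvert \<Rightarrow> ('b,'a) gvert" where
  "swp (InA u) = InB u" | "swp (InB u) = InA u" | "swp Conn = Conn" | "swp Pend = Pend"

lemma swp_bij: "bij_betw swp (constr_V VA VB) (constr_V VB VA)"
proof -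
  have "swp (swp x) = x" for x :: "('a,'b) gvert" by (cases x) auto
  moreover have "swp (swp y) = y" for y :: "('b,'a) gvert" by (cases y) auto
  moreover have "swp ` constr_V VA VB \<subseteq> constr_V VB VA" by (auto simp: constr_V_def)
  moreover have "swp ` constr_V VB VA \<subseteq> constr_V VA VB" by (auto simp: constr_V_def)
  ultimately show ?thesis by (intro bij_betw_byWitness[where f' = swp]) auto
qed

lemma swp_E: "constr_E EB EA b1 a1 (swp x) (swp y) = constr_E EA EB a1 b1 x y"
  by (cases x; cases y) auto

lemma constr_E_V: "(\<And>x y. EA x y \<Longrightarrow> x \<in> VA \<and> y \<in> VA) \<Longrightarrow> (\<And>x y. EB x y \<Longrightarrow> x \<in> VB \<and> y \<in> VB) \<Longrightarrow>
  a1 \<in> VA \<Longrightarrow> b1 \<in> VB \<Longrightarrow> constr_E EA EB a1 b1 x y \<Longrightarrow> x \<in> constr_V VA VB \<and> y \<in> constr_V VA VB"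
  by (cases x; cases y) (auto simp: constr_V_def)

lemma swp_col: "indiv uncolored (InA u) (swp x) = indiv uncolored (InB u) x"
  by (cases x) (auto simp: indiv_def uncolored_def)

lemma WL1_swp:
  assumes "simple_graph VA EA" "simple_graph VB EB" "a1 \<in> VA" "b1 \<in> VB"
  shows "WL1 (constr_V VB VA) (constr_E EB EA b1 a1) (indiv uncolored (InA u))
       = WL1 (constr_V VA VB) (constr_E EA EB a1 b1) (indiv uncolored (InB u))"
proof (rule WL1_iso[OF _ swp_bij])
  show "finite (constr_V VA VB)" using assms by (simp add: fin_VG simple_graph_def)
  show "\<And>x y. constr_E EB EA b1 a1 x y \<Longrightarrow> x \<in> constr_V VB VA \<and> y \<in> constr_V VB VA"
    by (rule constr_E_V) (use assms in \<open>auto simp: simple_graph_def\<close>)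
qed (auto simp: swp_E swp_col)


lemma phi_sum:
  fixes VA :: "'a set" and VB :: "'b set"
  assumes sgA: "simple_graph VA EA" and sgB: "simple_graph VB EB"
    and regA: "\<And>u. u \<in> VA \<Longrightarrow> card (nbrs VA EA u) = d"
    and regB: "\<And>u. u \<in> VB \<Longrightarrow> card (nbrs VB EB u) = d"
    and d: "1 \<le> d"
    and radA: "\<And>x0 u. x0 \<in> VA \<Longrightarrow> u \<in> VA \<Longrightarrow> u = x0 \<or> EA x0 u \<or> (\<exists>w. EA x0 w \<and> EA w u)"
    and radB: "\<And>x0 u. x0 \<in> VB \<Longrightarrow> u \<in> VB \<Longrightarrow> u = x0 \<or> EB x0 u \<or> (\<exists>w. EB x0 w \<and> EB w u)"
    and cA: "card VA = n" and cB: "card VB = n" and a1: "a1 \<in> VA" and b1: "b1 \<in> VB"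
  shows "image_mset (\<lambda>x. Phi n d (WL1 (constr_V VA VB) (constr_E EA EB a1 b1) (indiv uncolored x))) (mset_set (constr_V VA VB))
    = image_mset (\<lambda>u. Some (WL1 VA EA (indiv (single_col a1) u))) (mset_set VA)
      + image_mset (\<lambda>u. Some (WL1 VB EB (indiv (single_col b1) u))) (mset_set VB) + {#None, None#}"
proof -
  have finA: "finite VA" and finB: "finite VB" using sgA sgB by (auto simp: simple_graph_def)
  have gg: "GG VA EA VB EB a1 b1 d" unfolding GG_def using assms by auto
  have gxA: "GX VA EA VB EB a1 b1 d u" if "u \<in> VA" for u
    unfolding GX_def GX_axioms_def using gg that radA[OF that] by auto
  have gxB: "GX VB EB VA EA b1 a1 d u" if "u \<in> VB" for u
    unfolding GX_def GX_axioms_def GG_def using assms that radB[OF that] by auto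
  have c3: "3 \<le> card (constr_V VA VB :: ('a,'b) gvert set)"
  proof -
    have "card VA \<noteq> 0" using a1 finA by auto
    then show ?thesis using card_VG[OF finA finB] by simp
  qed
  let ?F = "\<lambda>x. Phi n d (WL1 (constr_V VA VB) (constr_E EA EB a1 b1) (indiv uncolored x))"
  have A: "image_mset (\<lambda>u. ?F (InA u)) (mset_set VA) = image_mset (\<lambda>u. Some (WL1 VA EA (indiv (single_col a1) u))) (mset_set VA)"
    by (rule multiset.map_cong0) (use GX.phi_A[OF gxA cA cB d] finA in auto)
  have B: "image_mset (\<lambda>u. ?F (InB u)) (mset_set VB) = image_mset (\<lambda>u. Some (WL1 VB EB (indiv (single_col b1) u))) (mset_set VB)"
  proof (rule multiset.map_cong0)
    fix u assume "u \<in># mset_set VB"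
    then have u: "u \<in> VB" using finB by simp
    have "?F (InB u) = Phi n d (WL1 (constr_V VB VA) (constr_E EB EA b1 a1) (indiv uncolored (InA u)))"
      using WL1_swp[OF sgA sgB a1 b1, of u] by simp
    also have "\<dots> = Some (WL1 VB EB (indiv (single_col b1) u))"
      by (rule GX.phi_A[OF gxB[OF u] cB cA d])
    finally show "?F (InB u) = Some (WL1 VB EB (indiv (single_col b1) u))" .
  qed
  have C: "?F Conn = None" by (rule GG.phi_CP[OF gg _ d c3]) simp
  have P: "?F Pend = None" by (rule GG.phi_CP[OF gg _ d c3]) simp
  show ?thesis
    unfolding mset_VG[OF finA finB] using A B C P by (simp add: multiset.map_comp comp_def)
qed


lemma srg_rad:
  assumes srg: "strongly_regular V E n d lam mu" and mu: "1 \<le> mu"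
    and x0: "x0 \<in> V" and u: "u \<in> V"
  shows "u = x0 \<or> E x0 u \<or> (\<exists>w. E x0 w \<and> E w u)"
proof (cases "u = x0 \<or> E x0 u")
  case True then show ?thesis by blast
next
  case False
  then have "card (nbrs V E x0 \<inter> nbrs V E u) = mu" using srg_mu[OF srg x0 u] by auto
  then have "nbrs V E x0 \<inter> nbrs V E u \<noteq> {}" using mu by auto
  then obtain w where "E x0 w" "E u w" by (auto simp: nbrs_def)
  then show ?thesis using srg_sym[OF srg] by blast
qed

lemma srg_d1:
  assumes srg: "strongly_regular V E n d lam mu" and mu: "1 \<le> mu" and n: "2 \<le> n" and a: "a \<in> V"
  shows "1 \<le> d"
proof -
  have fin: "finite V" using srg_fin[OF srg] .
  have "card V \<ge> 2" using n srg_card[OF srg] by simp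
  have "\<not> V \<subseteq> {a}"
  proof
    assume "V \<subseteq> {a}"
    then have "card V \<le> card {a}" by (rule card_mono[rotated]) simp
    then show False using \<open>card V \<ge> 2\<close> by simp
  qed
  then obtain u where u: "u \<in> V" "u \<noteq> a" by auto
  from srg_rad[OF srg mu a u(1)] u obtain w where "E a w" by blast
  then have "w \<in> nbrs V E a" using srg_V[OF srg] by (auto simp: nbrs_def)
  then have "card (nbrs V E a) \<noteq> 0" using finite_nbrs[OF fin] by auto
  then show ?thesis using srg_deg[OF srg a] by simp
qed

lemma part2_main:
  fixes VA :: "'a set" and VB :: "'b set"
  assumes sA: "strongly_regular VA EA n d lam mu" and sB: "strongly_regular VB EB n d lam mu"
    and a1: "a1 \<in> VA" and b1: "b1 \<in> VB" and mu: "1 \<le> mu" and n: "2 \<le> n"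
    and ne: "WL32 VA EA (single_col a1) \<noteq> WL32 VB EB (single_col b1)"
  shows "WL32 (constr_V VA VB) (constr_E EA EB a1 b1) uncolored
       \<noteq> WL32 (constr_V VA VA) (constr_E EA EA a1 a1) uncolored"
proof
  assume eq: "WL32 (constr_V VA VB) (constr_E EA EB a1 b1) uncolored
       = WL32 (constr_V VA VA) (constr_E EA EA a1 a1) uncolored"
  have sgA: "simple_graph VA EA" and sgB: "simple_graph VB EB" using sA sB by (auto simp: strongly_regular_def)
  have d: "1 \<le> d" by (rule srg_d1[OF sA mu n a1])
  note PG = phi_sum[OF sgA sgB srg_deg[OF sA] srg_deg[OF sB] d srg_rad[OF sA mu] srg_rad[OF sB mu]
      srg_card[OF sA] srg_card[OF sB] a1 b1]
  note PH = phi_sum[OF sgA sgA srg_deg[OF sA] srg_deg[OF sA] d srg_rad[OF sA mu] srg_rad[OF sA mu]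
      srg_card[OF sA] srg_card[OF sA] a1 a1]
  let ?SA = "image_mset (\<lambda>u. Some (WL1 VA EA (indiv (single_col a1) u))) (mset_set VA)"
  let ?SB = "image_mset (\<lambda>u. Some (WL1 VB EB (indiv (single_col b1) u))) (mset_set VB)"
  have "image_mset (Phi n d) (WL32 (constr_V VA VB) (constr_E EA EB a1 b1) uncolored) = ?SA + ?SB + {#None, None#}"
    unfolding WL32_def multiset.map_comp comp_def using PG .
  moreover have "image_mset (Phi n d) (WL32 (constr_V VA VA) (constr_E EA EA a1 a1) uncolored) = ?SA + ?SA + {#None, None#}"
    unfolding WL32_def multiset.map_comp comp_def using PH .
  ultimately have "?SB = ?SA" using eq by simp
  then have "image_mset the ?SB = image_mset the ?SA" by simp
  then have "WL32 VB EB (single_col b1) = WL32 VA EA (single_col a1)"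
    unfolding WL32_def multiset.map_comp comp_def by simp
  then show False using ne by simp
qed


definition cn :: "'a set \<Rightarrow> ('a \<Rightarrow> 'a \<Rightarrow> bool) \<Rightarrow> 'a \<Rightarrow> 'a set" where
  "cn V E p = insert p (nbrs V E p)"

type_synonym bc = "bool \<times> bool \<times> bool \<times> bool"

fun Mx :: "nat \<Rightarrow> nat \<Rightarrow> bc multiset" where
  "Mx d 0 = {#(True,True,True,True)#} + replicate_mset d (False,False,True,True)"
| "Mx d (Suc 0) = {#(True,False,True,True), (False,True,True,True)#} + replicate_mset (d - 1) (False,False,True,True)"
| "Mx d (Suc (Suc _)) = {#(True,False,True,False)#} + replicate_mset d (False,False,True,False)"

fun Ma :: "nat \<Rightarrow> nat \<Rightarrow> bc multiset" where
  "Ma d 0 = Mx d 0"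
| "Ma d (Suc 0) = Mx d 1"
| "Ma d (Suc (Suc _)) = {#(False,True,False,True)#} + replicate_mset d (False,False,False,True)"

definition Mall :: "nat \<Rightarrow> nat \<Rightarrow> nat \<Rightarrow> bc multiset" where
  "Mall n d t = (if t = 2 then Mx d 2 + Ma d 2 + replicate_mset (n - (d+1) - (d+1)) (False,False,False,False)
     else Mx d t + replicate_mset (n - (d+1)) (False,False,False,False))"

definition Qt :: "nat \<Rightarrow> nat \<Rightarrow> bc \<Rightarrow> bc multiset" where
  "Qt d t k = (case k of (bx, ba, cx, ca) \<Rightarrow>
     if cx then Mx d t - {#k#} else if ca then Ma d t - {#k#} else replicate_mset d (False,False,False,False))"

definition ccf :: "bc \<Rightarrow> nat option" where
  "ccf k = (case k of (bx, ba, cx, ca) \<Rightarrow> if bx then None else Some (if ba then 1 else 0))"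

context
  fixes V :: "'a set" and E n d lam
  assumes srg: "strongly_regular V E n d lam 0"
begin

lemma fin: "finite V" using srg_fin[OF srg] .
lemma sym: "E x y \<Longrightarrow> E y x" using srg_sym[OF srg] .
lemma irr: "\<not> E x x" using srg_irr[OF srg] .
lemma EV: "E x y \<Longrightarrow> x \<in> V \<and> y \<in> V" using srg_V[OF srg] .

lemma nomu: "u \<in> V \<Longrightarrow> v \<in> V \<Longrightarrow> u \<noteq> v \<Longrightarrow> \<not> E u v \<Longrightarrow> E w u \<Longrightarrow> E w v \<Longrightarrow> False"
proof -
  assume uv: "u \<in> V" "v \<in> V" "u \<noteq> v" "\<not> E u v" and w: "E w u" "E w v"
  have "card (nbrs V E u \<inter> nbrs V E v) = 0" using srg_mu[OF srg uv] .
  moreover have "w \<in> nbrs V E u \<inter> nbrs V E v" using w sym EV by (auto simp: nbrs_def)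
  moreover have "finite (nbrs V E u \<inter> nbrs V E v)" using finite_nbrs[OF fin] by auto
  ultimately show False by auto
qed

lemma cn_adj: "E u v \<Longrightarrow> cn V E u = cn V E v"
proof -
  assume e: "E u v"
  have uv: "u \<in> V" "v \<in> V" using EV[OF e] by auto
  have sub: "cn V E p \<subseteq> cn V E q" if pq: "E p q" for p q
  proof
    fix w assume "w \<in> cn V E p"
    then have "w = p \<or> E p w" by (auto simp: cn_def nbrs_def)
    then show "w \<in> cn V E q"
    proof
      assume "w = p" then show ?thesis using pq sym EV by (auto simp: cn_def nbrs_def)
    next
      assume pw: "E p w"
      show ?thesis
      proof (cases "w = q \<or> E q w")
        case True then show ?thesis using EV[OF pw] by (auto simp: cn_def nbrs_def)
      next
        case False
        then have "False" using nomu[of w q p] EV[OF pw] EV[OF pq] pw pq sym by blast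
        then show ?thesis ..
      qed
    qed
  qed
  show ?thesis using sub[OF e] sub[OF sym[OF e]] by auto
qed

lemma cn_mem: "v \<in> cn V E p \<Longrightarrow> cn V E v = cn V E p"
  unfolding cn_def nbrs_def using cn_adj[unfolded cn_def nbrs_def] sym by auto

lemma card_cn: "p \<in> V \<Longrightarrow> card (cn V E p) = d + 1"
  unfolding cn_def using srg_deg[OF srg] finite_nbrs[OF fin] irr by (simp add: nbrs_def)

lemma cn_sub: "p \<in> V \<Longrightarrow> cn V E p \<subseteq> V" by (auto simp: cn_def nbrs_def)

lemma nbrs_cn: "v \<in> V \<Longrightarrow> nbrs V E v = cn V E v - {v}"
  using irr by (auto simp: cn_def nbrs_def)

end

lemma mset_set_minus: "finite A \<Longrightarrow> v \<in> A \<Longrightarrow> image_mset f (mset_set (A - {v})) = image_mset f (mset_set A) - {#f v#}"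
proof -
  assume A: "finite A" "v \<in> A"
  have e: "mset_set A = add_mset v (mset_set (A - {v}))" using A by (simp add: mset_set.remove)
  show ?thesis by (simp add: e)
qed

context
  fixes V :: "'a set" and E n d lam x a
  assumes srg: "strongly_regular V E n d lam 0" and x: "x \<in> V" and a: "a \<in> V"
begin

definition cls4 :: "'a \<Rightarrow> bc" where
  "cls4 v = (v = x, v = a, v \<in> cn V E x, v \<in> cn V E a)"

lemma disj: "x \<noteq> a \<Longrightarrow> \<not> E x a \<Longrightarrow> cn V E x \<inter> cn V E a = {}"
proof (rule ccontr)
  assume xa: "x \<noteq> a" "\<not> E x a" and "cn V E x \<inter> cn V E a \<noteq> {}"
  then obtain w where w: "w \<in> cn V E x" "w \<in> cn V E a" by auto
  then have "cn V E x = cn V E a" using cn_mem[OF srg] by metis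
  then have "a \<in> cn V E x" by (simp add: cn_def)
  then show False using xa by (auto simp: cn_def nbrs_def)
qed

lemma finN: "finite (nbrs V E p)" using finite_nbrs[OF fin[OF srg]] .

lemma L_Mx: "image_mset cls4 (mset_set (cn V E x)) = Mx d (rl E x a)"
proof -
  have cnx: "cn V E x = insert x (nbrs V E x)" "x \<notin> nbrs V E x" using irr[OF srg] by (auto simp: cn_def nbrs_def)
  have base: "image_mset cls4 (mset_set (cn V E x)) = {#cls4 x#} + image_mset cls4 (mset_set (nbrs V E x))"
    unfolding cnx(1) using cnx(2) finN by simp
  consider "x = a" | "x \<noteq> a" "E x a" | "x \<noteq> a" "\<not> E x a" by blast
  then show ?thesis
  proof cases
    case 1
    have "image_mset cls4 (mset_set (nbrs V E x)) = replicate_mset d (False,False,True,True)"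
    proof -
      have "\<And>w. w \<in> nbrs V E x \<Longrightarrow> cls4 w = (False,False,True,True)"
        unfolding cls4_def using 1 irr[OF srg] by (auto simp: cn_def nbrs_def)
      then show ?thesis using img_const[OF finN, where f=cls4] srg_deg[OF srg x] by simp
    qed
    moreover have "cls4 x = (True,True,True,True)" unfolding cls4_def using 1 by (simp add: cn_def)
    ultimately show ?thesis using base 1 by (simp add: rl_def)
  next
    case 2
    have aN: "a \<in> nbrs V E x" using 2 a by (simp add: nbrs_def)
    have ca: "cn V E a = cn V E x" using cn_adj[OF srg 2(2)] by simp
    have "image_mset cls4 (mset_set (nbrs V E x)) = {#cls4 a#} + image_mset cls4 (mset_set (nbrs V E x - {a}))"
      using mset_set_minus[OF finN aN, of cls4] aN finN
      by (simp add: mset_set.remove[OF finN aN])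
    also have "image_mset cls4 (mset_set (nbrs V E x - {a})) = replicate_mset (d - 1) (False,False,True,True)"
    proof -
      have "\<And>w. w \<in> nbrs V E x - {a} \<Longrightarrow> cls4 w = (False,False,True,True)"
        using irr[OF srg] ca by (auto simp: cls4_def cn_def nbrs_def)
      moreover have "card (nbrs V E x - {a}) = d - 1" using srg_deg[OF srg x] aN finN by simp
      ultimately show ?thesis using img_const[where S="nbrs V E x - {a}" and f=cls4] finN by simp
    qed
    finally have N2: "image_mset cls4 (mset_set (nbrs V E x)) = {#cls4 a#} + replicate_mset (d - 1) (False,False,True,True)" .
    have clsx: "cls4 x = (True,False,True,True)" unfolding cls4_def using 2 sym[OF srg] x by (simp add: cn_def nbrs_def)
    have clsa: "cls4 a = (False,True,True,True)" unfolding cls4_def using 2 a by (simp add: cn_def nbrs_def)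
    have rl1: "rl E x a = Suc 0" using 2 by (simp add: rl_def)
    show ?thesis unfolding base N2 clsx clsa rl1 by simp
  next
    case 3
    have dj: "cn V E x \<inter> cn V E a = {}" using disj 3 by simp
    have "image_mset cls4 (mset_set (nbrs V E x)) = replicate_mset d (False,False,True,False)"
    proof -
      have "\<And>w. w \<in> nbrs V E x \<Longrightarrow> cls4 w = (False,False,True,False)"
      proof -
        fix w assume w: "w \<in> nbrs V E x"
        then have "w \<in> cn V E x" "w \<noteq> x" using irr[OF srg] by (auto simp: cn_def nbrs_def)
        moreover then have "w \<notin> cn V E a" "w \<noteq> a" using dj by (auto simp: cn_def)
        ultimately show "cls4 w = (False,False,True,False)" by (simp add: cls4_def)
      qed
      then show ?thesis using img_const[OF finN, where f=cls4] srg_deg[OF srg x] by simp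
    qed
    moreover have "cls4 x = (True,False,True,False)" using 3 dj by (auto simp: cls4_def cn_def)
    moreover have "rl E x a = Suc (Suc 0)" using 3 by (simp add: rl_def)
    ultimately show ?thesis using base by simp
  qed
qed

end

context
  fixes V :: "'a set" and E n d lam x a
  assumes srg: "strongly_regular V E n d lam 0" and x: "x \<in> V" and a: "a \<in> V"
begin

abbreviation "c4 \<equiv> cls4 V E x a"

lemma c4_def: "c4 v = (v = x, v = a, v \<in> cn V E x, v \<in> cn V E a)"
  by (rule cls4_def[OF srg x a])

lemma finN': "finite (nbrs V E p)" using finite_nbrs[OF fin[OF srg]] .

lemma L_Ma: "image_mset c4 (mset_set (cn V E a)) = Ma d (rl E x a)"
proof -
  consider "x = a" | "x \<noteq> a" "E x a" | "x \<noteq> a" "\<not> E x a" by blast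
  then show ?thesis
  proof cases
    case 1 then show ?thesis using L_Mx[OF srg x a] by (simp add: rl_def)
  next
    case 2
    have "cn V E a = cn V E x" using cn_adj[OF srg 2(2)] by simp
    then show ?thesis using L_Mx[OF srg x a] 2 by (simp add: rl_def)
  next
    case 3
    have dj: "cn V E x \<inter> cn V E a = {}" using disj[OF srg x a] 3 by simp
    have cna: "cn V E a = insert a (nbrs V E a)" "a \<notin> nbrs V E a" using irr[OF srg] by (auto simp: cn_def nbrs_def)
    have base: "image_mset c4 (mset_set (cn V E a)) = {#c4 a#} + image_mset c4 (mset_set (nbrs V E a))"
      unfolding cna(1) using cna(2) finN' by simp
    have N: "image_mset c4 (mset_set (nbrs V E a)) = replicate_mset d (False,False,False,True)"
    proof -
      have "\<And>w. w \<in> nbrs V E a \<Longrightarrow> c4 w = (False,False,False,True)"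
      proof -
        fix w assume w: "w \<in> nbrs V E a"
        then have "w \<in> cn V E a" "w \<noteq> a" using irr[OF srg] by (auto simp: cn_def nbrs_def)
        moreover then have "w \<notin> cn V E x" "w \<noteq> x" using dj by (auto simp: cn_def)
        ultimately show "c4 w = (False,False,False,True)" by (simp add: c4_def)
      qed
      then show ?thesis using img_const[OF finN', where f=c4] srg_deg[OF srg a] by simp
    qed
    have ca: "c4 a = (False,True,False,True)" using 3 dj by (auto simp: c4_def cn_def)
    have rl2: "rl E x a = Suc (Suc 0)" using 3 by (simp add: rl_def)
    show ?thesis unfolding base N ca rl2 by simp
  qed
qed

lemma L_Q: "v \<in> V \<Longrightarrow> image_mset c4 (mset_set (nbrs V E v)) = Qt d (rl E x a) (c4 v)"
proof -
  assume v: "v \<in> V"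
  have fx: "finite (cn V E x)" and fa: "finite (cn V E a)" using finN' by (auto simp: cn_def)
  have nb: "nbrs V E v = cn V E v - {v}" by (rule nbrs_cn[OF srg v])
  consider "v \<in> cn V E x" | "v \<notin> cn V E x" "v \<in> cn V E a" | "v \<notin> cn V E x" "v \<notin> cn V E a" by blast
  then show ?thesis
  proof cases
    case 1
    have "nbrs V E v = cn V E x - {v}" using nb cn_mem[OF srg 1] by simp
    then have "image_mset c4 (mset_set (nbrs V E v)) = Mx d (rl E x a) - {#c4 v#}"
      using mset_set_minus[OF fx 1, of c4] L_Mx[OF srg x a] by simp
    moreover have ce: "c4 v = (v = x, v = a, True, v \<in> cn V E a)" using 1 by (simp add: c4_def)
    ultimately show ?thesis by (simp add: Qt_def)
  next
    case 2
    have "nbrs V E v = cn V E a - {v}" using nb cn_mem[OF srg 2(2)] by simp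
    then have "image_mset c4 (mset_set (nbrs V E v)) = Ma d (rl E x a) - {#c4 v#}"
      using mset_set_minus[OF fa 2(2), of c4] L_Ma by simp
    moreover have ce: "c4 v = (v = x, v = a, False, True)" using 2 by (simp add: c4_def)
    ultimately show ?thesis by (simp add: Qt_def)
  next
    case 3
    have "\<And>w. w \<in> nbrs V E v \<Longrightarrow> c4 w = (False,False,False,False)"
    proof -
      fix w assume w: "w \<in> nbrs V E v"
      then have vw: "v \<in> cn V E w" using sym[OF srg] v by (auto simp: cn_def nbrs_def)
      have "w \<notin> cn V E x"
      proof
        assume "w \<in> cn V E x"
        then have "cn V E w = cn V E x" by (rule cn_mem[OF srg])
        then show False using vw 3 by simp
      qed
      moreover have "w \<notin> cn V E a"
      proof
        assume "w \<in> cn V E a"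
        then have "cn V E w = cn V E a" by (rule cn_mem[OF srg])
        then show False using vw 3 by simp
      qed
      moreover have "x \<in> cn V E x" "a \<in> cn V E a" by (auto simp: cn_def)
      ultimately show "c4 w = (False,False,False,False)" by (auto simp: c4_def)
    qed
    then have "image_mset c4 (mset_set (nbrs V E v)) = replicate_mset d (False,False,False,False)"
      using img_const[OF finN', where f=c4] srg_deg[OF srg v] by simp
    moreover have ce: "c4 v = (v = x, v = a, False, False)" using 3 by (simp add: c4_def)
    ultimately show ?thesis by (simp add: Qt_def)
  qed
qed


lemma L_all: "image_mset c4 (mset_set V) = Mall n d (rl E x a)"
proof -
  have fV: "finite V" using fin[OF srg] .
  have fx: "finite (cn V E x)" and fa: "finite (cn V E a)" using finN' by (auto simp: cn_def)
  have sx: "cn V E x \<subseteq> V" and sa: "cn V E a \<subseteq> V" using cn_sub[OF srg x] cn_sub[OF srg a] .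
  have xin: "x \<in> cn V E x" and ain: "a \<in> cn V E a" by (auto simp: cn_def)
  have cx: "card (cn V E x) = d + 1" and ca: "card (cn V E a) = d + 1" using card_cn[OF srg x] card_cn[OF srg a] .
  have cV: "card V = n" using srg_card[OF srg] .
  consider "x = a \<or> E x a" | "x \<noteq> a" "\<not> E x a" by blast
  then show ?thesis
  proof cases
    case 1
    have eq: "cn V E a = cn V E x" using 1 cn_adj[OF srg, of x a] by auto
    have V: "V = cn V E x \<union> (V - cn V E x)" using sx by auto
    have "mset_set V = mset_set (cn V E x) + mset_set (V - cn V E x)"
      by (subst V, rule mset_set_Union) (use fx fV in auto)
    moreover have "image_mset c4 (mset_set (V - cn V E x)) = replicate_mset (n - (d + 1)) (False,False,False,False)"
    proof -
      have "\<And>w. w \<in> V - cn V E x \<Longrightarrow> c4 w = (False,False,False,False)"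
        using eq xin ain by (auto simp: c4_def)
      moreover have "card (V - cn V E x) = n - (d + 1)" using card_Diff_subset[OF fx sx] cx cV by simp
      ultimately show ?thesis using img_const[where S = "V - cn V E x" and f = c4] fV by simp
    qed
    moreover have "rl E x a \<noteq> 2" using 1 by (auto simp: rl_def)
    ultimately show ?thesis using L_Mx[OF srg x a] by (simp add: Mall_def)
  next
    case 2
    have dj: "cn V E x \<inter> cn V E a = {}" using disj[OF srg x a] 2 by simp
    have V: "V = (cn V E x \<union> cn V E a) \<union> (V - cn V E x - cn V E a)" using sx sa by auto
    have "mset_set V = mset_set (cn V E x \<union> cn V E a) + mset_set (V - cn V E x - cn V E a)"
      by (subst V, rule mset_set_Union) (use fx fa fV in auto)
    moreover have "mset_set (cn V E x \<union> cn V E a) = mset_set (cn V E x) + mset_set (cn V E a)"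
      by (rule mset_set_Union) (use fx fa dj in auto)
    moreover have "image_mset c4 (mset_set (V - cn V E x - cn V E a)) = replicate_mset (n - (d + 1) - (d + 1)) (False,False,False,False)"
    proof -
      have "\<And>w. w \<in> V - cn V E x - cn V E a \<Longrightarrow> c4 w = (False,False,False,False)"
        using xin ain by (auto simp: c4_def)
      moreover have "card (V - cn V E x - cn V E a) = n - (d + 1) - (d + 1)"
      proof -
        have "card (V - cn V E x) = n - (d + 1)" using card_Diff_subset[OF fx sx] cx cV by simp
        moreover have "cn V E a \<subseteq> V - cn V E x" using sa dj by auto
        ultimately show ?thesis using card_Diff_subset[OF fa] ca by simp
      qed
      ultimately show ?thesis using img_const[where S = "V - cn V E x - cn V E a" and f = c4] fV by simp
    qed
    moreover have "rl E x a = 2" using 2 by (auto simp: rl_def)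
    ultimately show ?thesis using L_Mx[OF srg x a] L_Ma by (simp add: Mall_def)
  qed
qed

lemma WL1_deg: "WL1 V E (indiv (single_col a) x) = image_mset (eqF ccf (Qt d (rl E x a)) n) (Mall n d (rl E x a))"
proof -
  have fV: "finite V" using fin[OF srg] .
  have "WL1 V E (indiv (single_col a) x) = image_mset (eqF ccf (Qt d (rl E x a)) n \<circ> c4) (mset_set V)"
    unfolding WL1_def srg_card[OF srg]
    by (rule multiset.map_cong0)
       (use cref_equit[OF fV, where cls = c4 and cc = ccf and Q = "Qt d (rl E x a)" and E = E] L_Q fV
         in \<open>auto simp: indiv_def single_col_def ccf_def c4_def\<close>)
  also have "\<dots> = image_mset (eqF ccf (Qt d (rl E x a)) n) (image_mset c4 (mset_set V))"
    by (simp add: multiset.map_comp)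
  finally show ?thesis unfolding L_all .
qed

end

lemma WL32_deg:
  assumes srg: "strongly_regular V E n d lam 0" and a: "a \<in> V"
  shows "WL32 V E (single_col a) = image_mset (\<lambda>t. image_mset (eqF ccf (Qt d t) n) (Mall n d t)) (RCm n d)"
proof -
  have fV: "finite V" using fin[OF srg] .
  have "WL32 V E (single_col a) = image_mset (\<lambda>x. (\<lambda>t. image_mset (eqF ccf (Qt d t) n) (Mall n d t)) (rl E x a)) (mset_set V)"
    unfolding WL32_def by (rule multiset.map_cong0) (use WL1_deg[OF srg _ a] fV in auto)
  also have "\<dots> = image_mset (\<lambda>t. image_mset (eqF ccf (Qt d t) n) (Mall n d t)) (RCm n d)"
    by (rule img_rl[OF srg a])
  finally show ?thesis .
qed


lemma WL32_one:
  assumes srg: "strongly_regular V E 1 d lam mu" and a: "a \<in> V"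
  shows "WL32 V E (single_col a) = {#{#CS (C0 None) {#}#}#}"
proof -
  have fV: "finite V" using srg_fin[OF srg] .
  have "card V = 1" using srg_card[OF srg] .
  then have V: "V = {a}" using a fV by (metis card_1_singletonE singletonD)
  have nb: "nbrs V E a = {}" using srg_irr[OF srg] V by (auto simp: nbrs_def)
  show ?thesis unfolding WL32_def WL1_def V using nb V
    by (simp add: indiv_def)
qed

theorem lemma6p4:
  fixes VA :: "'a set" and EA :: "'a \<Rightarrow> 'a \<Rightarrow> bool"
    and VB :: "'b set" and EB :: "'b \<Rightarrow> 'b \<Rightarrow> bool"
    and a1 :: 'a and b1 :: 'b and n d lam mu :: nat
  assumes "strongly_regular VA EA n d lam mu"
    and "strongly_regular VB EB n d lam mu"
    and "a1 \<in> VA" and "b1 \<in> VB"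
  shows "(\<forall>r. omega_ms (constr_V VA VB) (constr_E EA EB a1 b1) r
              = omega_ms (constr_V VA VA) (constr_E EA EA a1 a1) r)
       \<and> omega_bullet (constr_V VA VB) (constr_E EA EB a1 b1)
              = omega_bullet (constr_V VA VA) (constr_E EA EA a1 a1)
       \<and> (WL32 VA EA (single_col a1) \<noteq> WL32 VB EB (single_col b1) \<longrightarrow>
            WL32 (constr_V VA VB) (constr_E EA EB a1 b1) uncolored
              \<noteq> WL32 (constr_V VA VA) (constr_E EA EA a1 a1) uncolored)"
proof -
  note sA = assms(1) and sB = assms(2) and a1 = assms(3) and b1 = assms(4)
  have P2: "WL32 VA EA (single_col a1) \<noteq> WL32 VB EB (single_col b1) \<longrightarrow>
            WL32 (constr_V VA VB) (constr_E EA EB a1 b1) uncolored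
              \<noteq> WL32 (constr_V VA VA) (constr_E EA EA a1 a1) uncolored"
  proof
    assume ne: "WL32 VA EA (single_col a1) \<noteq> WL32 VB EB (single_col b1)"
    have n1: "1 \<le> n" using srg_card[OF sA] a1 srg_fin[OF sA]
      by (metis One_nat_def Suc_leI card_gt_0_iff empty_iff)
    show "WL32 (constr_V VA VB) (constr_E EA EB a1 b1) uncolored
              \<noteq> WL32 (constr_V VA VA) (constr_E EA EA a1 a1) uncolored"
    proof (cases "mu = 0")
      case True
      then have "WL32 VA EA (single_col a1) = WL32 VB EB (single_col b1)"
        using WL32_deg[of VA EA n d lam a1] WL32_deg[of VB EB n d lam b1] sA sB a1 b1 by simp
      then show ?thesis using ne by simp
    next
      case mu: False
      show ?thesis
      proof (cases "n = 1")
        case True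
        then have "WL32 VA EA (single_col a1) = WL32 VB EB (single_col b1)"
          using WL32_one[of VA EA d lam mu a1] WL32_one[of VB EB d lam mu b1] sA sB a1 b1 by simp
        then show ?thesis using ne by simp
      next
        case False
        then have "2 \<le> n" using n1 by simp
        moreover have "1 \<le> mu" using mu by simp
        ultimately show ?thesis using part2_main[OF sA sB a1 b1 _ _ ne] by simp
      qed
    qed
  qed
  show ?thesis using part1[OF sA sB a1 b1] P2 by blast
qed


end
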